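(* Let $a>0$, let $\sigma$ be a probability measure on $[0,a]$, and let $\mu=\int_0^a\mathcal{P}(\lambda)\,\sigma(\mathrm{d}\lambda)$. Then, with $\rho$ the Euclidean distance on $\mathbb{N}$, $$h_{a+a^2/4}\big(W_{1,\rho}(\nu,\mu)\big)\le H(\nu|\mu)\qquad\text{for all }\nu\in\mathcal{M}_1(\mathbb{N}).$$
   Context: $\mathcal{P}(\lambda)(k)=\mathrm{e}^{-\lambda}\lambda^k/k!$ on $\mathbb{N}$ for $\lambda>0$, and $\mathcal{P}(0)$ is the Dirac mass at $0$. $W_{1,\rho}(\mu,\nu)=\inf_\pi\int\!\!\int|x-y|\,\mathrm{d}\pi(x,y)$ over couplings $\pi$ of $\mu,\nu$. $H(\nu|\mu)=\int\log\frac{\mathrm{d}\nu}{\mathrm{d}\mu}\,\mathrm{d}\nu$ if $\nu\ll\mu$, $+\infty$ otherwise. $h(r)=(1+r)\log(1+r)-r$, $h_c(r)=c\,h(r/c)$ for $c>0$. *)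

theory Defs
  imports "HOL-Probability.Probability"
begin

text \<open>Poisson weight: P(lambda)(k) = exp(-lambda) lambda^k / k!.  Since 0^0 = 1,
  for lambda = 0 this is the Dirac mass at 0.\<close>
definition poisson_weight :: "real \<Rightarrow> nat \<Rightarrow> real" where
  "poisson_weight l k = exp (- l) * l ^ k / fact k"

text \<open>Couplings of two probability measures on the naturals (all such measures are pmfs).\<close>
definition couplings :: "nat pmf \<Rightarrow> nat pmf \<Rightarrow> (nat \<times> nat) pmf set" where
  "couplings \<nu> \<mu> = {\<pi>. map_pmf fst \<pi> = \<nu> \<and> map_pmf snd \<pi> = \<mu>}"

definition W1 :: "nat pmf \<Rightarrow> nat pmf \<Rightarrow> ennreal" where
  "W1 \<nu> \<mu> = (INF \<pi> \<in> couplings \<nu> \<mu>.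
      \<integral>\<^sup>+ xy. ennreal \<bar>real (fst xy) - real (snd xy)\<bar> \<partial>measure_pmf \<pi>)"

definition rel_entropy :: "nat pmf \<Rightarrow> nat pmf \<Rightarrow> ereal" where
  "rel_entropy \<nu> \<mu> =
     (if (\<forall>k. pmf \<mu> k = 0 \<longrightarrow> pmf \<nu> k = 0) then
        (let f = (\<lambda>k. ln (pmf \<nu> k / pmf \<mu> k)) in
          enn2ereal (\<integral>\<^sup>+ k. ennreal (f k) \<partial>measure_pmf \<nu>)
          - enn2ereal (\<integral>\<^sup>+ k. ennreal (- f k) \<partial>measure_pmf \<nu>))
      else \<infinity>)"

definition h_fun :: "real \<Rightarrow> real" where
  "h_fun r = (1 + r) * ln (1 + r) - r"

definition h_c :: "real \<Rightarrow> real \<Rightarrow> real" where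
  "h_c c r = c * h_fun (r / c)"

definition h_c_ext :: "real \<Rightarrow> ennreal \<Rightarrow> ereal" where
  "h_c_ext c w = (if w = \<infinity> then \<infinity> else ereal (h_c c (enn2real w)))"

end

theory Submission
  imports Defs
begin


definition pois :: "real \<Rightarrow> nat pmf" where
  "pois s = (if 0 < s then poisson_pmf s else return_pmf 0)"

lemma pmf_pois: "0 \<le> s \<Longrightarrow> pmf (pois s) k = poisson_weight s k"
proof (cases "s > 0")
  case True thus ?thesis by (simp add: pois_def poisson_weight_def)
next
  case False
  assume "0 \<le> s" with False have "s = 0" by simp
  thus ?thesis by (cases k) (auto simp: pois_def poisson_weight_def pmf_return)
qed

lemma pw_nonneg: "0 \<le> s \<Longrightarrow> 0 \<le> poisson_weight s k"
  by (simp add: poisson_weight_def)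

lemma pw_conv:
  assumes "0 \<le> a" "0 \<le> b"
  shows "(\<Sum>i\<le>m. poisson_weight a i * poisson_weight b (m - i)) = poisson_weight (a + b) m"
proof -
  have "poisson_weight (a + b) m = exp (-a) * exp (-b) * (\<Sum>i\<le>m. of_nat (m choose i) * a ^ i * b ^ (m - i)) / fact m"
    by (simp add: poisson_weight_def binomial_ring exp_add[symmetric])
  also have "\<dots> = (\<Sum>i\<le>m. exp (-a) * exp (-b) * (of_nat (m choose i) / fact m) * a ^ i * b ^ (m - i))"
    by (simp add: sum_divide_distrib sum_distrib_left mult_ac)
  also have "\<dots> = (\<Sum>i\<le>m. poisson_weight a i * poisson_weight b (m - i))"
    by (rule sum.cong) (auto simp: binomial_fact poisson_weight_def field_simps)
  finally show ?thesis by simp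
qed

lemma pois_add:
  assumes "0 \<le> a" "0 \<le> b"
  shows "pois (a + b) = bind_pmf (pois a) (\<lambda>i. map_pmf ((+) i) (pois b))"
proof (rule pmf_eqI)
  fix m
  have inj: "inj ((+) (i::nat))" for i by (auto simp: inj_def)
  have pm: "pmf (map_pmf ((+) i) (pois b)) m = (if i \<le> m then poisson_weight b (m - i) else 0)" for i
  proof (cases "i \<le> m")
    case True
    then have "m = i + (m - i)" by simp
    then have "pmf (map_pmf ((+) i) (pois b)) m = pmf (map_pmf ((+) i) (pois b)) (i + (m - i))" by simp
    also have "\<dots> = pmf (pois b) (m - i)" by (rule pmf_map_inj'[OF inj])
    finally show ?thesis using True assms by (simp add: pmf_pois)
  next
    case False
    then have "((+) i -` {m}) = {}" by auto
    then show ?thesis using False by (simp add: pmf_map)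
  qed
  have "pmf (bind_pmf (pois a) (\<lambda>i. map_pmf ((+) i) (pois b))) m
      = (\<integral>i. (if i \<le> m then poisson_weight b (m - i) else 0) \<partial>measure_pmf (pois a))"
    by (simp add: pmf_bind pm)
  also have "\<dots> = (\<Sum>i\<in>{..m}. (if i \<le> m then poisson_weight b (m - i) else 0) * pmf (pois a) i)"
    by (rule integral_measure_pmf_real) (auto split: if_splits)
  also have "\<dots> = (\<Sum>i\<le>m. poisson_weight a i * poisson_weight b (m - i))"
    using assms by (intro sum.cong) (auto simp: pmf_pois)
  also have "\<dots> = pmf (pois (a + b)) m"
    using assms by (simp add: pw_conv pmf_pois)
  finally show "pmf (pois (a + b)) m = pmf (bind_pmf (pois a) (\<lambda>i. map_pmf ((+) i) (pois b))) m" by simp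
qed

definition bnd :: "(nat \<Rightarrow> real) \<Rightarrow> bool" where
  "bnd g \<longleftrightarrow> (\<exists>B. \<forall>k. \<bar>g k\<bar> \<le> B)"

definition lip1 :: "(nat \<Rightarrow> real) \<Rightarrow> bool" where
  "lip1 g \<longleftrightarrow> (\<forall>k. \<bar>g (Suc k) - g k\<bar> \<le> 1)"

definition Tp :: "real \<Rightarrow> (nat \<Rightarrow> real) \<Rightarrow> nat \<Rightarrow> real" where
  "Tp s g k = measure_pmf.expectation (pois s) (\<lambda>j. g (k + j))"

lemma bnd_integrable: "bnd g \<Longrightarrow> integrable (measure_pmf p) (\<lambda>j. g (h j))"
  unfolding bnd_def
  by (elim exE, rule measure_pmf.integrable_const_bound) auto

lemma bndE: "bnd g \<Longrightarrow> (\<And>B. (\<And>k. \<bar>g k\<bar> \<le> B) \<Longrightarrow> P) \<Longrightarrow> P"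
  unfolding bnd_def by blast

lemma bnd_const[simp]: "bnd (\<lambda>_. c)" unfolding bnd_def by blast

lemma bnd_shift: "bnd g \<Longrightarrow> bnd (\<lambda>k. g (h k))"
  unfolding bnd_def by blast

lemma bnd_add: "bnd f \<Longrightarrow> bnd g \<Longrightarrow> bnd (\<lambda>k. f k + g k)"
  unfolding bnd_def by (metis abs_triangle_ineq add_mono order_trans)

lemma bnd_cmult: "bnd f \<Longrightarrow> bnd (\<lambda>k. c * f k)"
  unfolding bnd_def by (metis abs_mult mult_left_mono abs_ge_zero)

lemma bnd_diff: "bnd f \<Longrightarrow> bnd g \<Longrightarrow> bnd (\<lambda>k. f k - g k)"
  using bnd_add[of f "\<lambda>k. -1 * g k"] bnd_cmult[of g "-1"] by simp

lemma bnd_exp: "bnd f \<Longrightarrow> bnd (\<lambda>k. exp (f k))"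
  unfolding bnd_def by (metis abs_exp_cancel abs_le_D1 exp_le_cancel_iff)

lemma Tp_const[simp]: "Tp s (\<lambda>_. c) k = c"
  by (simp add: Tp_def)

lemma Tp_mono: "bnd f \<Longrightarrow> bnd g \<Longrightarrow> (\<And>k. f k \<le> g k) \<Longrightarrow> Tp s f k \<le> Tp s g k"
  unfolding Tp_def by (intro integral_mono bnd_integrable) auto

lemma Tp_add: "bnd f \<Longrightarrow> bnd g \<Longrightarrow> Tp s (\<lambda>k. f k + g k) k = Tp s f k + Tp s g k"
  unfolding Tp_def by (intro Bochner_Integration.integral_add bnd_integrable)

lemma Tp_cmult: "Tp s (\<lambda>k. c * f k) k = c * Tp s f k"
  unfolding Tp_def by simp

lemma Tp_diff: "bnd f \<Longrightarrow> bnd g \<Longrightarrow> Tp s (\<lambda>k. f k - g k) k = Tp s f k - Tp s g k"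
  unfolding Tp_def by (intro Bochner_Integration.integral_diff bnd_integrable)

lemma Tp_bound: "(\<And>k. \<bar>g k\<bar> \<le> B) \<Longrightarrow> \<bar>Tp s g k\<bar> \<le> B"
proof -
  assume b: "\<And>k. \<bar>g k\<bar> \<le> B"
  have bg: "bnd g" using b unfolding bnd_def by blast
  have 1: "Tp s g k \<le> Tp s (\<lambda>_. B) k" by (rule Tp_mono) (use bg b abs_le_D1 in auto)
  have "\<And>k. -B \<le> g k" using b by (metis abs_le_D2 minus_le_iff)
  then have "Tp s (\<lambda>_. -B) k \<le> Tp s g k" by (intro Tp_mono) (use bg in auto)
  with 1 show ?thesis by simp
qed

lemma Tp_bnd: "bnd g \<Longrightarrow> bnd (Tp s g)"
  by (metis Tp_bound bnd_def)

lemma Tp_semigroup: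
  assumes "0 \<le> a" "0 \<le> b" "bnd g"
  shows "Tp (a + b) g k = Tp a (Tp b g) k"
proof -
  obtain B where B: "\<And>k. \<bar>g k\<bar> \<le> B" using assms(3) by (auto simp: bnd_def)
  have "Tp (a + b) g k = measure_pmf.expectation (bind_pmf (pois a) (\<lambda>i. map_pmf ((+) i) (pois b))) (\<lambda>j. g (k + j))"
    unfolding Tp_def pois_add[OF assms(1,2)] ..
  also have "\<dots> = (\<integral>i. measure_pmf.expectation (map_pmf ((+) i) (pois b)) (\<lambda>j. g (k + j)) \<partial>pois a)"
    unfolding measure_pmf_bind
    by (rule integral_bind[where K="count_space UNIV" and B=B and B'=1])
       (use B measure_pmf_in_subprob_algebra in auto)
  also have "\<dots> = (\<integral>i. Tp b g (k + i) \<partial>pois a)"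
    by (simp add: Tp_def add.assoc)
  finally show ?thesis by (simp add: Tp_def)
qed

lemma Tp_lip: assumes "lip1 g" "bnd g" shows "lip1 (Tp s g)"
  unfolding lip1_def
proof
  fix k
  have "Tp s g (Suc k) - Tp s g k = Tp s (\<lambda>j. g (Suc j) - g j) k"
    unfolding Tp_def
    by (subst Bochner_Integration.integral_diff[symmetric]) (auto intro!: bnd_integrable assms)
  also have "\<bar>\<dots>\<bar> \<le> 1" by (rule Tp_bound) (use assms(1) in \<open>auto simp: lip1_def\<close>)
  finally show "\<bar>Tp s g (Suc k) - Tp s g k\<bar> \<le> 1" .
qed


lemma pois_hasint:
  assumes s: "0 \<le> s" and F: "\<And>j. 0 \<le> F j" and S: "(\<lambda>j. poisson_weight s j * F j) sums S"
  shows "has_bochner_integral (measure_pmf (pois s)) F S"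
proof (rule has_bochner_integral_nn_integral)
  have nn: "0 \<le> poisson_weight s j * F j" for j using s F by (simp add: pw_nonneg)
  show "0 \<le> S" using sums_le[OF _ sums_zero S] nn by auto
  have "(\<integral>\<^sup>+ j. ennreal (F j) \<partial>measure_pmf (pois s)) = (\<Sum>j. ennreal (poisson_weight s j * F j))"
    by (simp add: nn_integral_measure_pmf nn_integral_count_space_nat pmf_pois s F pw_nonneg ennreal_mult)
  also have "\<dots> = ennreal S" by (rule suminf_ennreal_eq[OF nn S])
  finally show "(\<integral>\<^sup>+ j. ennreal (F j) \<partial>measure_pmf (pois s)) = ennreal S" .
qed (use F in auto)

lemma pw_sums_exp:
  assumes "0 \<le> s"
  shows "(\<lambda>j. poisson_weight s j * z ^ j) sums exp (s * (z - 1))"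
proof -
  have "(\<lambda>j. exp (-s) * ((s * z) ^ j /\<^sub>R fact j)) sums (exp (-s) * exp (s * z))"
    by (intro sums_mult exp_converges)
  moreover have "exp (-s) * exp (s * z) = exp (s * (z - 1))"
    by (simp add: exp_add[symmetric] algebra_simps)
  ultimately show ?thesis
    by (simp add: poisson_weight_def power_mult_distrib field_simps)
qed

lemma pois_mgf:
  assumes "0 \<le> s" "0 \<le> z"
  shows "has_bochner_integral (measure_pmf (pois s)) (\<lambda>j. z ^ j) (exp (s * (z - 1)))"
  by (rule pois_hasint) (use assms pw_sums_exp in auto)

lemma pois_mean:
  assumes s: "0 \<le> s"
  shows "has_bochner_integral (measure_pmf (pois s)) (\<lambda>j. real j) s"
proof (rule pois_hasint[OF s])
  have "(\<lambda>j. poisson_weight s j) sums 1" using pw_sums_exp[OF s, of 1] by simp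
  then have "(\<lambda>j. s * poisson_weight s j) sums (s * 1)" by (rule sums_mult)
  moreover have "s * poisson_weight s j = poisson_weight s (Suc j) * real (Suc j)" for j
  proof -
    have "fact (Suc j) = (real (Suc j)) * (fact j :: real)" by simp
    moreover have "(fact j :: real) > 0" by simp
    ultimately show ?thesis by (simp add: poisson_weight_def field_simps del: of_nat_Suc)
  qed
  ultimately have "(\<lambda>j. poisson_weight s (Suc j) * real (Suc j)) sums s" by simp
  then show "(\<lambda>j. poisson_weight s j * real j) sums s"
    by (subst (asm) sums_Suc_iff) simp
qed auto

lemma pois_tail:
  assumes s: "0 \<le> s" "s \<le> 1" and z: "0 \<le> z"
  shows "integrable (measure_pmf (pois s)) (\<lambda>j. if 2 \<le> j then z ^ j else 0)"
    and "measure_pmf.expectation (pois s) (\<lambda>j. if 2 \<le> j then z ^ j else 0) \<le> s\<^sup>2 * z\<^sup>2 * exp z"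
proof -
  define G where "G j = (if 2 \<le> j then z ^ (j - 2) / fact (j - 2) else 0)" for j
  define T where "T j = poisson_weight s j * (if 2 \<le> j then z ^ j else 0)" for j
  have Gs: "G sums exp z"
  proof -
    have "(\<lambda>j. G (Suc (Suc j))) sums exp z"
      using exp_converges[of z] by (simp add: G_def divide_inverse mult.commute)
    then have "(\<lambda>j. G (Suc j)) sums exp z" by (subst (asm) sums_Suc_iff) (simp add: G_def)
    then show ?thesis by (subst (asm) sums_Suc_iff) (simp add: G_def)
  qed
  have Tnn: "0 \<le> T j" for j using s z by (simp add: T_def pw_nonneg)
  have TG: "T j \<le> s\<^sup>2 * z\<^sup>2 * G j" for j
  proof (cases "2 \<le> j")
    case True
    then obtain i where j: "j = i + 2" by (metis add.commute le_Suc_ex)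
    have "T j = exp (-s) * (s ^ i * s\<^sup>2) * (z ^ i * z\<^sup>2) / fact (i + 2)"
      using j by (simp add: T_def poisson_weight_def power_add power_mult_distrib power2_eq_square)
    also have "\<dots> \<le> 1 * (1 * s\<^sup>2) * (z ^ i * z\<^sup>2) / fact i"
    proof (intro frac_le mult_mono)
      show "fact i \<le> (fact (i + 2) :: real)" by (intro fact_mono) simp
      show "s ^ i \<le> 1" using s by (simp add: power_le_one)
      show "exp (-s) \<le> 1" using s by simp
    qed (use s z in auto)
    also have "\<dots> = s\<^sup>2 * z\<^sup>2 * G j" using j by (simp add: G_def power2_eq_square)
    finally show ?thesis .
  qed (simp add: T_def G_def)
  have sumT: "summable T"
    by (rule summable_comparison_test[of _ "\<lambda>j. s\<^sup>2 * z\<^sup>2 * G j"])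
       (use Tnn TG Gs in \<open>auto intro!: summable_mult sums_summable\<close>)
  have "suminf T \<le> (\<Sum>j. s\<^sup>2 * z\<^sup>2 * G j)"
    by (intro suminf_le TG sumT summable_mult sums_summable[OF Gs])
  also have "\<dots> = s\<^sup>2 * z\<^sup>2 * exp z" using Gs by (simp add: suminf_mult sums_unique[symmetric] sums_summable[OF Gs])
  finally have le: "suminf T \<le> s\<^sup>2 * z\<^sup>2 * exp z" .
  have hb: "has_bochner_integral (measure_pmf (pois s)) (\<lambda>j. if 2 \<le> j then z ^ j else 0) (suminf T)"
    by (rule pois_hasint) (use s z sumT in \<open>auto simp: summable_sums[of T, unfolded T_def[abs_def]] T_def[abs_def]\<close>)
  show "integrable (measure_pmf (pois s)) (\<lambda>j. if 2 \<le> j then z ^ j else 0)"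
    using hb by (auto simp: has_bochner_integral_iff)
  show "measure_pmf.expectation (pois s) (\<lambda>j. if 2 \<le> j then z ^ j else 0) \<le> s\<^sup>2 * z\<^sup>2 * exp z"
    using hb le by (simp add: has_bochner_integral_integral_eq)
qed


definition psi :: "real \<Rightarrow> real" where "psi t = exp t - 1 - t"

lemma psi_mono: "0 \<le> (x::real) \<Longrightarrow> x \<le> t \<Longrightarrow> psi x \<le> psi t"
proof -
  assume "0 \<le> x" "x \<le> t"
  have "exp t = exp x * exp (t - x)" by (simp add: exp_add[symmetric])
  moreover have e1: "1 + (t - x) \<le> exp (t - x)" by (rule exp_ge_add_one_self)
  moreover have e2: "1 \<le> exp x" using \<open>0 \<le> x\<close> by simp
  ultimately have "1 * (t - x) \<le> exp x * (exp (t - x) - 1)"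
    by (intro mult_mono; use e1 e2 \<open>x \<le> t\<close> in linarith)
  also have "\<dots> = exp t - exp x" using \<open>exp t = exp x * exp (t - x)\<close> by (simp add: algebra_simps)
  finally have "exp t - exp x \<ge> t - x" by simp
  then show ?thesis unfolding psi_def by simp
qed

lemma sinh_ge: "0 \<le> (y::real) \<Longrightarrow> 2 * y \<le> exp y - exp (- y)"
proof -
  assume y: "0 \<le> y"
  have "(\<lambda>y. exp y - exp (- y) - 2 * y) 0 \<le> (\<lambda>y. exp y - exp (- y) - 2 * y) y"
  proof (rule DERIV_nonneg_imp_nondecreasing[OF y])
    fix x :: real
    have d: "((\<lambda>y. exp y - exp (- y) - 2 * y) has_real_derivative (exp x + exp (- x) - 2)) (at x)"
      by (auto intro!: derivative_eq_intros)
    have "exp x * exp (-x) = 1" by (simp add: exp_minus)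
    moreover have "exp (x/2) * exp (x/2) = exp x" by (simp flip: exp_add)
    moreover have "exp (-x/2) * exp (-x/2) = exp (-x)" by (simp flip: exp_add)
    moreover have "exp (x/2) * exp (-x/2) = 1" by (simp flip: exp_add)
    ultimately have "exp x + exp (- x) - 2 = (exp (x/2) - exp (-x/2))\<^sup>2"
      by (simp add: power2_eq_square algebra_simps)
    then have "exp x + exp (- x) - 2 \<ge> 0" by simp
    with d show "\<exists>y. ((\<lambda>y. exp y - exp (- y) - 2 * y) has_real_derivative y) (at x) \<and> 0 \<le> y" by blast
  qed
  then show ?thesis by simp
qed

lemma psi_abs_le: assumes "\<bar>x\<bar> \<le> t" shows "psi x \<le> psi t"
proof (cases "0 \<le> x")
  case True then show ?thesis using assms psi_mono by simp
next
  case False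
  then have "psi x \<le> psi (- x)" using sinh_ge[of "-x"] by (simp add: psi_def)
  also have "\<dots> \<le> psi t" using False assms by (intro psi_mono) auto
  finally show ?thesis .
qed

lemma psi_nonneg: "0 \<le> psi t"
  using exp_ge_add_one_self[of t] unfolding psi_def by linarith

lemma lip1_bound: "lip1 g \<Longrightarrow> \<bar>g (k + j) - g k\<bar> \<le> real j"
proof (induction j)
  case (Suc j)
  have "\<bar>g (Suc (k + j)) - g (k + j)\<bar> \<le> 1" using Suc.prems by (simp add: lip1_def)
  with Suc show ?case by simp
qed simp


definition Ct :: "real \<Rightarrow> real" where
  "Ct t = t + exp 1 * ((exp t)\<^sup>2 * exp (exp t)) + t * ((exp 1)\<^sup>2 * exp (exp 1))"

lemma final_ineq:
  fixes t e c A Eh K1 K2 :: real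
  assumes t: "0 \<le> t" and e: "0 < e" "e \<le> 1" and c: "\<bar>c\<bar> \<le> 1"
    and K1: "0 \<le> K1" and K2: "0 \<le> K2"
    and A: "A \<le> exp (-e) + exp (t * c) * (e * exp (-e)) + e\<^sup>2 * K1"
    and Eh: "c * (e * exp (-e)) - e\<^sup>2 * K2 \<le> Eh"
  shows "A \<le> exp (t * Eh + e * psi t + (t + exp 1 * K1 + t * K2) * e\<^sup>2)"
proof -
  define E0 where "E0 = exp (e * (exp (t * c) - 1))"
  have s1: "exp (-e) + exp (t * c) * (e * exp (-e)) \<le> E0"
  proof -
    have "exp (-e) + exp (t * c) * (e * exp (-e)) = exp (-e) * (1 + e * exp (t * c))" by (simp add: algebra_simps)
    also have "\<dots> \<le> exp (-e) * exp (e * exp (t * c))"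
      by (intro mult_left_mono exp_ge_add_one_self) auto
    also have "\<dots> = E0" by (simp add: E0_def algebra_simps flip: exp_add)
    finally show ?thesis .
  qed
  have s2: "1 \<le> exp 1 * E0"
  proof -
    have "e * (-1) \<le> e * (exp (t * c) - 1)" using e by (intro mult_left_mono) (auto simp: less_imp_le)
    then have "-1 \<le> e * (exp (t * c) - 1)" using e by linarith
    then have "exp (-1) \<le> E0" unfolding E0_def by simp
    then have "exp 1 * exp (-1) \<le> exp 1 * E0" by simp
    then show ?thesis by (simp flip: exp_add)
  qed
  have s3: "e\<^sup>2 * K1 \<le> E0 * (exp 1 * e\<^sup>2 * K1)"
  proof -
    have "e\<^sup>2 * K1 = 1 * (e\<^sup>2 * K1)" by simp
    also have "\<dots> \<le> (exp 1 * E0) * (e\<^sup>2 * K1)" using s2 K1 by (intro mult_right_mono) auto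
    finally show ?thesis by (simp add: mult_ac)
  qed
  have "A \<le> E0 * (1 + exp 1 * e\<^sup>2 * K1)" using A s1 s3 by (simp add: algebra_simps)
  also have "\<dots> \<le> E0 * exp (exp 1 * e\<^sup>2 * K1)"
    by (intro mult_left_mono exp_ge_add_one_self) (simp add: E0_def)
  also have "\<dots> = exp (e * (exp (t * c) - 1) + exp 1 * e\<^sup>2 * K1)" by (simp add: E0_def flip: exp_add)
  also have "\<dots> \<le> exp (t * Eh + e * psi t + (t + exp 1 * K1 + t * K2) * e\<^sup>2)"
  proof (subst exp_le_cancel_iff)
    have tc: "\<bar>t * c\<bar> \<le> t" using t c by (simp add: abs_mult mult_left_le)
    have s4: "e * (exp (t * c) - 1) \<le> e * (t * c) + e * psi t"
    proof -
      have "psi (t * c) \<le> psi t" by (rule psi_abs_le[OF tc])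
      then have "e * psi (t * c) \<le> e * psi t" using e by simp
      then show ?thesis by (simp add: psi_def algebra_simps)
    qed
    have em: "0 \<le> 1 - exp (-e)" "1 - exp (-e) \<le> e"
      using e exp_ge_add_one_self[of "-e"] by auto
    have "\<bar>c * (1 - exp (-e))\<bar> \<le> 1 * e"
      unfolding abs_mult using c em by (intro mult_mono) auto
    then have "c * (1 - exp (-e)) \<le> e" by simp
    then have "(t * e) * (c * (1 - exp (-e))) \<le> (t * e) * e" using t e by (intro mult_left_mono) auto
    then have s5: "e * (t * c) \<le> t * (c * (e * exp (-e))) + t * e\<^sup>2"
      by (simp add: algebra_simps power2_eq_square)
    have s6: "t * (c * (e * exp (-e))) - t * (e\<^sup>2 * K2) \<le> t * Eh"
      using mult_left_mono[OF Eh t] by (simp add: algebra_simps)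
    show "e * (exp (t * c) - 1) + exp 1 * e\<^sup>2 * K1 \<le> t * Eh + e * psi t + (t + exp 1 * K1 + t * K2) * e\<^sup>2"
      using s4 s5 s6 by (simp add: algebra_simps)
  qed
  finally show ?thesis .
qed

lemma bnd_integrable': "bnd g \<Longrightarrow> integrable (measure_pmf p) g"
  using bnd_integrable[of g p "\<lambda>j. j"] by simp

lemma one_step:
  fixes g :: "nat \<Rightarrow> real"
  assumes lip: "lip1 g" and bg: "bnd g" and t: "0 \<le> t" and e: "0 < e" "e \<le> 1"
  shows "Tp e (\<lambda>k. exp (t * g k)) k \<le> exp (t * Tp e g k + e * psi t + Ct t * e\<^sup>2)"
proof -
  define h where "h j = g (k + j) - g k" for j
  define c where "c = h 1"
  define I0 where "I0 j = (if j = 0 then 1 else 0 :: real)" for j :: nat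
  define I1 where "I1 j = (if j = 1 then 1 else 0 :: real)" for j :: nat
  define Tz where "Tz z j = (if 2 \<le> j then z ^ j else 0 :: real)" for z j
  let ?M = "measure_pmf (pois e)"
  have hb: "\<bar>h j\<bar> \<le> real j" for j unfolding h_def by (rule lip1_bound[OF lip])
  have c1: "\<bar>c\<bar> \<le> 1" using hb[of 1] by (simp add: c_def)
  have bh: "bnd h" using bnd_diff[OF bnd_shift[OF bg, of "\<lambda>j. k + j"] bnd_const[of "g k"]] by (simp add: h_def[abs_def])
  have bI0: "bnd I0" unfolding bnd_def I0_def by (rule exI[of _ 1]) auto
  have bI1: "bnd I1" unfolding bnd_def I1_def by (rule exI[of _ 1]) auto
  have EI0: "measure_pmf.expectation (pois e) I0 = exp (-e)"
    using e by (subst integral_measure_pmf_real[of "{0}"]) (auto simp: I0_def pmf_pois poisson_weight_def split: if_splits)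
  have EI1: "measure_pmf.expectation (pois e) I1 = e * exp (-e)"
    using e by (subst integral_measure_pmf_real[of "{1}"]) (auto simp: I1_def pmf_pois poisson_weight_def split: if_splits)
  have tail: "integrable ?M (Tz z)" "measure_pmf.expectation (pois e) (Tz z) \<le> e\<^sup>2 * z\<^sup>2 * exp z" if "0 \<le> z" for z
    using pois_tail[of e z] that e unfolding Tz_def[abs_def] by auto
  have ieh: "integrable ?M (\<lambda>j. exp (t * h j))"
    by (rule bnd_integrable') (intro bnd_exp bnd_cmult bh)
  have up: "exp (t * h j) \<le> I0 j + exp (t * c) * I1 j + Tz (exp t) j" for j
  proof -
    consider "j = 0" | "j = 1" | "2 \<le> j" by linarith
    then show ?thesis
    proof cases
      case 1 then show ?thesis by (simp add: h_def I0_def I1_def Tz_def)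
    next
      case 2 then show ?thesis by (simp add: c_def I0_def I1_def Tz_def)
    next
      case 3
      have "t * h j \<le> real j * t" using mult_left_mono[OF _ t, of "h j" "real j"] hb[of j] by (simp add: mult.commute)
      then have "exp (t * h j) \<le> exp (real j * t)" by simp
      also have "\<dots> = exp t ^ j" by (rule exp_of_nat_mult)
      finally show ?thesis using 3 by (simp add: I0_def I1_def Tz_def)
    qed
  qed
  have A: "measure_pmf.expectation (pois e) (\<lambda>j. exp (t * h j)) \<le> exp (-e) + exp (t * c) * (e * exp (-e)) + e\<^sup>2 * (exp t)\<^sup>2 * exp (exp t)"
  proof -
    have "measure_pmf.expectation (pois e) (\<lambda>j. exp (t * h j)) \<le> measure_pmf.expectation (pois e) (\<lambda>j. I0 j + exp (t * c) * I1 j + Tz (exp t) j)"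
      by (intro integral_mono up ieh Bochner_Integration.integrable_add integrable_mult_right tail bnd_integrable' bI0 bI1) simp
    also have "\<dots> = measure_pmf.expectation (pois e) I0 + exp (t * c) * measure_pmf.expectation (pois e) I1 + measure_pmf.expectation (pois e) (Tz (exp t))"
      by (subst Bochner_Integration.integral_add; (intro Bochner_Integration.integrable_add integrable_mult_right tail bnd_integrable' bI0 bI1)?; simp?)+
    also have "\<dots> \<le> exp (-e) + exp (t * c) * (e * exp (-e)) + e\<^sup>2 * (exp t)\<^sup>2 * exp (exp t)"
      using tail(2)[of "exp t"] by (simp add: EI0 EI1)
    finally show ?thesis .
  qed
  have lo: "c * I1 j - Tz (exp 1) j \<le> h j" for j
  proof -
    consider "j = 0" | "j = 1" | "2 \<le> j" by linarith
    then show ?thesis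
    proof cases
      case 1 then show ?thesis by (simp add: h_def I1_def Tz_def)
    next
      case 2 then show ?thesis by (simp add: c_def I1_def Tz_def)
    next
      case 3
      have "real j \<le> 1 + real j" by simp
      also have "\<dots> \<le> exp (real j * 1)" using exp_ge_add_one_self[of "real j"] by simp
      also have "\<dots> = exp 1 ^ j" by (rule exp_of_nat_mult)
      finally have "- (exp 1 ^ j) \<le> h j" using hb[of j] by linarith
      then show ?thesis using 3 by (simp add: I1_def Tz_def)
    qed
  qed
  have B: "c * (e * exp (-e)) - e\<^sup>2 * ((exp 1)\<^sup>2 * exp (exp 1)) \<le> measure_pmf.expectation (pois e) h"
  proof -
    have "c * (e * exp (-e)) - e\<^sup>2 * ((exp 1)\<^sup>2 * exp (exp 1)) \<le> c * measure_pmf.expectation (pois e) I1 - measure_pmf.expectation (pois e) (Tz (exp 1))"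
      using tail(2)[of "exp 1"] by (simp add: EI1 mult_ac)
    also have "\<dots> = measure_pmf.expectation (pois e) (\<lambda>j. c * I1 j - Tz (exp 1) j)"
      using tail(1)[of "exp 1"] bnd_integrable'[OF bI1]
      by (subst Bochner_Integration.integral_diff) (auto intro!: integrable_mult_right)
    also have "\<dots> \<le> measure_pmf.expectation (pois e) h"
      by (intro integral_mono lo bnd_integrable' bh Bochner_Integration.integrable_diff integrable_mult_right tail bI1) simp
    finally show ?thesis .
  qed
  have fin: "measure_pmf.expectation (pois e) (\<lambda>j. exp (t * h j))
      \<le> exp (t * measure_pmf.expectation (pois e) h + e * psi t + Ct t * e\<^sup>2)"
    unfolding Ct_def
    by (rule final_ineq[OF t e c1 _ _ _ B]) (use A in \<open>auto simp: mult_ac\<close>)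
  have L: "Tp e (\<lambda>k. exp (t * g k)) k = exp (t * g k) * measure_pmf.expectation (pois e) (\<lambda>j. exp (t * h j))"
  proof -
    have "exp (t * g k) * exp (t * h j) = exp (t * g (k + j))" for j
      unfolding h_def exp_add[symmetric] by (simp add: algebra_simps)
    then have "(\<lambda>j. exp (t * g (k + j))) = (\<lambda>j. exp (t * g k) * exp (t * h j))" by simp
    then show ?thesis unfolding Tp_def by simp
  qed
  have R: "Tp e g k = g k + measure_pmf.expectation (pois e) h"
  proof -
    have "measure_pmf.expectation (pois e) h = Tp e g k - g k"
      unfolding h_def Tp_def
      by (subst Bochner_Integration.integral_diff) (auto intro!: bnd_integrable bg)
    then show ?thesis by simp
  qed
  have "Tp e (\<lambda>k. exp (t * g k)) k \<le> exp (t * g k) * exp (t * measure_pmf.expectation (pois e) h + e * psi t + Ct t * e\<^sup>2)"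
    unfolding L by (intro mult_left_mono fin) simp
  also have "\<dots> = exp (t * Tp e g k + e * psi t + Ct t * e\<^sup>2)"
    unfolding R by (simp add: algebra_simps flip: exp_add)
  finally show ?thesis .
qed


lemma Tp_zero[simp]: "Tp 0 g k = g k"
  by (simp add: Tp_def pois_def)

lemma iter_bound:
  assumes t: "0 \<le> t" and e: "0 < e" "e \<le> 1"
  shows "lip1 f \<Longrightarrow> bnd f \<Longrightarrow>
    Tp (real n * e) (\<lambda>k. exp (t * f k)) 0 \<le> exp (real n * (e * psi t + Ct t * e\<^sup>2)) * exp (t * Tp (real n * e) f 0)"
proof (induction n arbitrary: f)
  case 0 then show ?case by simp
next
  case (Suc n)
  define D where "D = e * psi t + Ct t * e\<^sup>2"
  have n0: "0 \<le> real n * e" using e by simp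
  have bef: "bnd (\<lambda>k. exp (t * f k))" by (intro bnd_exp bnd_cmult Suc.prems)
  have "Tp (real (Suc n) * e) (\<lambda>k. exp (t * f k)) 0 = Tp (real n * e + e) (\<lambda>k. exp (t * f k)) 0"
    by (simp add: algebra_simps)
  also have "\<dots> = Tp (real n * e) (Tp e (\<lambda>k. exp (t * f k))) 0"
    by (rule Tp_semigroup[OF n0 _ bef]) (use e in simp)
  also have "\<dots> \<le> Tp (real n * e) (\<lambda>k. exp (D) * exp (t * Tp e f k)) 0"
  proof (rule Tp_mono)
    show "bnd (Tp e (\<lambda>k. exp (t * f k)))" by (rule Tp_bnd[OF bef])
    show "bnd (\<lambda>k. exp D * exp (t * Tp e f k))"
      by (intro bnd_cmult bnd_exp Tp_bnd Suc.prems)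
    fix k
    show "Tp e (\<lambda>k. exp (t * f k)) k \<le> exp D * exp (t * Tp e f k)"
      using one_step[OF Suc.prems t e, of k] unfolding D_def by (simp add: algebra_simps flip: exp_add)
  qed
  also have "\<dots> = exp D * Tp (real n * e) (\<lambda>k. exp (t * Tp e f k)) 0"
    by (rule Tp_cmult)
  also have "\<dots> \<le> exp D * (exp (real n * D) * exp (t * Tp (real n * e) (Tp e f) 0))"
    unfolding D_def
    by (intro mult_left_mono Suc.IH Tp_lip Tp_bnd Suc.prems) simp
  also have "Tp (real n * e) (Tp e f) 0 = Tp (real (Suc n) * e) f 0"
    using Tp_semigroup[OF n0 _ Suc.prems(2), of e 0] e by (simp add: algebra_simps)
  also have "exp D * (exp (real n * D) * exp (t * Tp (real (Suc n) * e) f 0)) =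
      exp (real (Suc n) * D) * exp (t * Tp (real (Suc n) * e) f 0)"
    by (simp add: algebra_simps flip: exp_add)
  finally show ?case unfolding D_def .
qed

lemma pois_laplace:
  assumes lip: "lip1 f" and bf: "bnd f" and t: "0 \<le> t" and L: "0 \<le> L"
  shows "Tp L (\<lambda>k. exp (t * f k)) 0 \<le> exp (t * Tp L f 0 + L * psi t)"
proof (cases "L = 0")
  case True then show ?thesis by simp
next
  case False
  with L have L0: "0 < L" by simp
  define X where "X = Tp L (\<lambda>k. exp (t * f k)) 0"
  define a where "a = t * Tp L f 0 + L * psi t"
  have ev: "X \<le> exp (a + Ct t * L\<^sup>2 / real n)" if n: "n \<ge> nat \<lceil>L\<rceil> + 1" for n
  proof -
    have npos: "real n > 0" using n by simp
    have "L \<le> real (nat \<lceil>L\<rceil>)" by linarith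
    then have Ln: "L \<le> real n" using n by linarith
    define e where "e = L / real n"
    have e: "0 < e" "e \<le> 1" using L0 npos Ln by (auto simp: e_def)
    have ne: "real n * e = L" using npos by (simp add: e_def)
    have "X \<le> exp (real n * (e * psi t + Ct t * e\<^sup>2)) * exp (t * Tp L f 0)"
      using iter_bound[OF t e lip bf, of n] unfolding ne X_def .
    also have "real n * (e * psi t + Ct t * e\<^sup>2) = L * psi t + Ct t * L\<^sup>2 / real n"
      using npos by (simp add: e_def power2_eq_square field_simps)
    finally show ?thesis by (simp add: a_def algebra_simps flip: exp_add)
  qed
  have lim: "(\<lambda>n. exp (a + Ct t * L\<^sup>2 / real n)) \<longlonglongrightarrow> exp (a + 0)"
    by (intro tendsto_intros lim_const_over_n)
  show ?thesis
    using LIMSEQ_le_const[OF lim, of X] ev unfolding X_def[symmetric] a_def[symmetric] by auto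
qed


definition plip :: "real \<Rightarrow> (nat \<Rightarrow> real) \<Rightarrow> bool" where
  "plip K g \<longleftrightarrow> 0 \<le> K \<and> (\<forall>k j. \<bar>g (k + j) - g k\<bar> \<le> K * real j)"

lemma plip_lip1: "lip1 f \<Longrightarrow> plip 1 f"
  unfolding plip_def using lip1_bound by auto

lemma plip_bnd: assumes "\<And>k. \<bar>g k\<bar> \<le> B" shows "plip (2 * B) g"
  unfolding plip_def
proof safe
  show "0 \<le> 2 * B" using assms[of 0] by simp
  fix k j
  show "\<bar>g (k + j) - g k\<bar> \<le> 2 * B * real j"
  proof (cases j)
    case 0 then show ?thesis by simp
  next
    case (Suc i)
    have "\<bar>g (k + j) - g k\<bar> \<le> 2 * B" using assms[of "k+j"] assms[of k] by linarith
    also have "\<dots> \<le> 2 * B * real j" using Suc assms[of 0] by (intro mult_le_cancel_left1[THEN iffD2] ) auto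
    finally show ?thesis .
  qed
qed

lemma Tp_near:
  assumes "plip K g" "bnd g" "0 \<le> d"
  shows "\<bar>Tp d g k - g k\<bar> \<le> K * d"
proof -
  have im: "integrable (measure_pmf (pois d)) (\<lambda>j. real j)"
    using pois_mean[OF assms(3)] by (auto simp: has_bochner_integral_iff)
  have Em: "measure_pmf.expectation (pois d) (\<lambda>j. real j) = d"
    using pois_mean[OF assms(3)] by (auto simp: has_bochner_integral_iff)
  have "Tp d g k - g k = measure_pmf.expectation (pois d) (\<lambda>j. g (k + j) - g k)"
    unfolding Tp_def
    by (subst Bochner_Integration.integral_diff) (auto intro!: bnd_integrable assms(2))
  also have "\<bar>\<dots>\<bar> \<le> measure_pmf.expectation (pois d) (\<lambda>j. \<bar>g (k + j) - g k\<bar>)"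
    by (rule integral_abs_bound)
  also have "\<dots> \<le> measure_pmf.expectation (pois d) (\<lambda>j. K * real j)"
    using assms(1) unfolding plip_def
    by (intro integral_mono integrable_abs Bochner_Integration.integrable_diff bnd_integrable assms(2) integrable_mult_right im) auto
  also have "\<dots> = K * d" using Em by simp
  finally show ?thesis .
qed

lemma pois_max: "pois (max 0 l) = pois l"
  by (simp add: pois_def max_def)

lemma Tp_max: "Tp (max 0 l) g k = Tp l g k"
  by (simp add: Tp_def pois_max)

lemma Tp_param_lip:
  assumes "plip K g" "bnd g"
  shows "\<bar>Tp x g k - Tp y g k\<bar> \<le> K * \<bar>x - y\<bar>"
proof -
  have main: "\<bar>Tp q g k - Tp p g k\<bar> \<le> K * (q - p)" if "0 \<le> p" "p \<le> q" for p q
  proof -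
    have "Tp q g k = Tp (p + (q - p)) g k" by simp
    also have "\<dots> = Tp p (Tp (q - p) g) k" using that by (intro Tp_semigroup assms(2)) auto
    finally have "Tp q g k - Tp p g k = Tp p (\<lambda>i. Tp (q - p) g i - g i) k"
      by (simp add: Tp_diff Tp_bnd assms(2))
    also have "\<bar>\<dots>\<bar> \<le> K * (q - p)"
      by (rule Tp_bound) (use Tp_near[OF assms] that in auto)
    finally show ?thesis .
  qed
  have K: "0 \<le> K" using assms(1) by (simp add: plip_def)
  have "\<bar>Tp (max 0 x) g k - Tp (max 0 y) g k\<bar> \<le> K * \<bar>max 0 x - max 0 y\<bar>"
  proof (cases "max 0 y \<le> max 0 x")
    case True then show ?thesis using main[of "max 0 y" "max 0 x"] by simp
  next
    case False
    have h: "\<bar>Tp (max 0 y) g k - Tp (max 0 x) g k\<bar> \<le> K * (max 0 y - max 0 x)"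
      by (rule main) (use False in auto)
    moreover have "max 0 y - max 0 x = \<bar>max 0 x - max 0 y\<bar>" using False by auto
    ultimately show ?thesis by (metis abs_minus_commute)
  qed
  also have "\<dots> \<le> K * \<bar>x - y\<bar>" using K by (intro mult_left_mono) auto
  finally show ?thesis by (simp add: Tp_max)
qed

lemma Tp_param_cont:
  assumes "plip K g" "bnd g"
  shows "continuous_on S (\<lambda>l. Tp l g k)"
proof -
  have "K-lipschitz_on S (\<lambda>l. Tp l g k)"
    by (rule lipschitz_onI) (use Tp_param_lip[OF assms] assms(1) in \<open>auto simp: dist_real_def plip_def\<close>)
  then show ?thesis by (rule lipschitz_on_continuous_on)
qed

lemma Tp_param_meas:
  assumes "plip K g" "bnd g"
  shows "(\<lambda>l. Tp l g k) \<in> borel_measurable borel"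
  by (rule borel_measurable_continuous_onI Tp_param_cont assms)+

lemma plip_of_bnd: "bnd g \<Longrightarrow> \<exists>K. plip K g"
  unfolding bnd_def using plip_bnd by blast


lemma mix_basic:
  fixes a :: real and \<sigma> :: "real measure"
  assumes ps: "prob_space \<sigma>" and sb: "sets \<sigma> = sets borel" and sa: "emeasure \<sigma> {0..a} = 1"
  shows "AE l in \<sigma>. l \<in> {0..a}"
proof -
  interpret prob_space \<sigma> by (rule ps)
  have ev: "{0..a} \<in> sets \<sigma>" unfolding sb by (rule borel_closed) (rule closed_atLeastAtMost)
  have "prob {0..a} = 1" using sa emeasure_eq_measure[of "{0..a}"] by simp
  then show ?thesis using AE_in_set_eq_1[OF ev] by simp
qed

lemma meas_sigma:
  assumes sb: "sets \<sigma> = sets borel" and f: "f \<in> borel_measurable borel"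
  shows "f \<in> borel_measurable \<sigma>"
  using f measurable_cong_sets[OF sb refl] by blast

lemma pw_meas: "(\<lambda>l. poisson_weight l k) \<in> borel_measurable borel"
  unfolding poisson_weight_def
  by (intro borel_measurable_continuous_onI continuous_intros) simp

lemma Tp_integrable_sigma:
  assumes ps: "prob_space \<sigma>" and sb: "sets \<sigma> = sets borel" and bg: "bnd g"
  shows "integrable \<sigma> (\<lambda>l. Tp l g k)"
proof -
  interpret prob_space \<sigma> by (rule ps)
  obtain B where B: "\<And>k. \<bar>g k\<bar> \<le> B" using bg by (auto simp: bnd_def)
  obtain K where K: "plip K g" using plip_of_bnd[OF bg] by blast
  show ?thesis
    by (rule integrable_const_bound[where B=B]) (use Tp_bound B meas_sigma[OF sb Tp_param_meas[OF K bg]] in auto)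
qed

lemma mix_expect_nn:
  assumes ps: "prob_space \<sigma>" and sb: "sets \<sigma> = sets borel" and sa: "emeasure \<sigma> {0..a} = 1"
    and mu: "\<And>k. pmf \<mu> k = (\<integral>l. poisson_weight l k \<partial>\<sigma>)" and bg: "bnd g" and g0: "\<And>k. 0 \<le> g k"
  shows "measure_pmf.expectation \<mu> g = (\<integral>l. Tp l g 0 \<partial>\<sigma>)"
proof -
  interpret prob_space \<sigma> by (rule ps)
  have AE0: "AE l in \<sigma>. l \<in> {0..a}" by (rule mix_basic[OF ps sb sa])
  have pwm: "(\<lambda>l. poisson_weight l k) \<in> borel_measurable \<sigma>" for k by (rule meas_sigma[OF sb pw_meas])
  have pwi: "integrable \<sigma> (\<lambda>l. poisson_weight l k * g k)" for k
  proof (intro integrable_mult_left)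
    show "integrable \<sigma> (\<lambda>l. poisson_weight l k)"
    proof (rule integrable_const_bound[where B=1])
      show "AE l in \<sigma>. norm (poisson_weight l k) \<le> 1"
        using AE0 by eventually_elim (auto simp: pmf_pois[symmetric] pw_nonneg pmf_le_1)
    qed (rule pwm)
  qed
  have Tm: "(\<lambda>l. Tp l g 0) \<in> borel_measurable \<sigma>"
    using plip_of_bnd[OF bg] Tp_param_meas bg meas_sigma[OF sb] by blast
  have ennreal_eq: "ennreal (measure_pmf.expectation \<mu> g) = ennreal (\<integral>l. Tp l g 0 \<partial>\<sigma>)"
  proof -
    have "ennreal (measure_pmf.expectation \<mu> g) = (\<integral>\<^sup>+ k. ennreal (g k) \<partial>measure_pmf \<mu>)"
      by (rule nn_integral_eq_integral[symmetric]) (auto intro: bnd_integrable' bg g0)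
    also have "\<dots> = (\<Sum>k. ennreal (pmf \<mu> k * g k))"
      by (simp add: nn_integral_measure_pmf nn_integral_count_space_nat ennreal_mult g0)
    also have "\<dots> = (\<Sum>k. \<integral>\<^sup>+ l. ennreal (poisson_weight l k * g k) \<partial>\<sigma>)"
    proof (rule suminf_cong)
      fix k
      have "pmf \<mu> k * g k = (\<integral>l. poisson_weight l k * g k \<partial>\<sigma>)" by (simp add: mu)
      also have "ennreal \<dots> = (\<integral>\<^sup>+ l. ennreal (poisson_weight l k * g k) \<partial>\<sigma>)"
        by (rule nn_integral_eq_integral[symmetric, OF pwi])
           (use AE0 in \<open>eventually_elim, auto intro!: mult_nonneg_nonneg pw_nonneg g0\<close>)
      finally show "ennreal (pmf \<mu> k * g k) = (\<integral>\<^sup>+ l. ennreal (poisson_weight l k * g k) \<partial>\<sigma>)" .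
    qed
    also have "\<dots> = (\<integral>\<^sup>+ l. (\<Sum>k. ennreal (poisson_weight l k * g k)) \<partial>\<sigma>)"
      by (rule nn_integral_suminf[symmetric]) (use pwm in measurable)
    also have "\<dots> = (\<integral>\<^sup>+ l. ennreal (Tp l g 0) \<partial>\<sigma>)"
    proof (rule nn_integral_cong_AE)
      show "AE l in \<sigma>. (\<Sum>k. ennreal (poisson_weight l k * g k)) = ennreal (Tp l g 0)"
        using AE0
      proof eventually_elim
        case (elim l)
        then have l0: "0 \<le> l" by simp
        have "ennreal (Tp l g 0) = (\<integral>\<^sup>+ k. ennreal (g k) \<partial>measure_pmf (pois l))"
          unfolding Tp_def by (simp, rule nn_integral_eq_integral[symmetric]) (auto intro: bnd_integrable' bg g0)
        also have "\<dots> = (\<Sum>k. ennreal (poisson_weight l k * g k))"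
          by (simp add: nn_integral_measure_pmf nn_integral_count_space_nat ennreal_mult g0 pmf_pois l0 pw_nonneg[OF l0])
        finally show ?case by simp
      qed
    qed
    also have "\<dots> = ennreal (\<integral>l. Tp l g 0 \<partial>\<sigma>)"
      by (rule nn_integral_eq_integral) (use Tp_integrable_sigma[OF ps sb bg, of 0] in \<open>auto simp: Tp_def g0\<close>)
    finally show ?thesis .
  qed
  have "0 \<le> measure_pmf.expectation \<mu> g" by (simp add: g0)
  moreover have "0 \<le> (\<integral>l. Tp l g 0 \<partial>\<sigma>)" by (simp add: Tp_def g0)
  ultimately show ?thesis using ennreal_eq by simp
qed

lemma mix_expect:
  assumes ps: "prob_space \<sigma>" and sb: "sets \<sigma> = sets borel" and sa: "emeasure \<sigma> {0..a} = 1"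
    and mu: "\<And>k. pmf \<mu> k = (\<integral>l. poisson_weight l k \<partial>\<sigma>)" and bg: "bnd g"
  shows "measure_pmf.expectation \<mu> g = (\<integral>l. Tp l g 0 \<partial>\<sigma>)"
proof -
  interpret prob_space \<sigma> by (rule ps)
  obtain B where B: "\<And>k. \<bar>g k\<bar> \<le> B" using bg by (auto simp: bnd_def)
  have bg': "bnd (\<lambda>k. g k + B)" by (intro bnd_add bg bnd_const)
  have nn: "0 \<le> g k + B" for k using B[of k] by linarith
  have "measure_pmf.expectation \<mu> (\<lambda>k. g k + B) = (\<integral>l. Tp l (\<lambda>k. g k + B) 0 \<partial>\<sigma>)"
    by (rule mix_expect_nn[OF ps sb sa mu bg' nn])
  also have "\<dots> = (\<integral>l. Tp l g 0 + B \<partial>\<sigma>)" by (simp add: Tp_add bg)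
  also have "\<dots> = (\<integral>l. Tp l g 0 \<partial>\<sigma>) + B"
    by (subst Bochner_Integration.integral_add) (auto intro!: Tp_integrable_sigma[OF ps sb bg] simp: prob_space)
  finally show ?thesis
    by (subst (asm) Bochner_Integration.integral_add) (auto intro!: bnd_integrable' bg)
qed


lemma hoeff_part:
  fixes a :: real and \<sigma> :: "real measure"
  assumes a: "a > 0" and ps: "prob_space \<sigma>" and sb: "sets \<sigma> = sets borel" and sa: "emeasure \<sigma> {0..a} = 1"
    and lip: "lip1 f" and bf: "bnd f" and t: "0 \<le> t"
  shows "(\<integral>l. exp (t * Tp l f 0) \<partial>\<sigma>) \<le> exp (t * (\<integral>l. Tp l f 0 \<partial>\<sigma>) + t\<^sup>2 * a\<^sup>2 / 8)"
proof -
  interpret prob_space \<sigma> by (rule ps)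
  define F where "F l = Tp l f 0" for l
  have AE0: "AE l in \<sigma>. l \<in> {0..a}" by (rule mix_basic[OF ps sb sa])
  have pl: "plip 1 f" by (rule plip_lip1[OF lip])
  have Fm: "F \<in> borel_measurable \<sigma>" unfolding F_def by (rule meas_sigma[OF sb Tp_param_meas[OF pl bf]])
  obtain B where B: "\<And>k. \<bar>f k\<bar> \<le> B" using bf by (auto simp: bnd_def)
  have FB: "\<bar>F l\<bar> \<le> B" for l unfolding F_def by (rule Tp_bound[OF B])
  have Fi: "integrable \<sigma> F" by (rule integrable_const_bound[where B=B]) (use FB Fm in auto)
  show ?thesis
  proof (cases "t = 0")
    case True then show ?thesis by (simp add: prob_space)
  next
    case False
    with t have t0: "0 < t" by simp
    have cont: "continuous_on {0..a} F" unfolding F_def by (rule Tp_param_cont[OF pl bf])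
    obtain x0 where x0: "x0 \<in> {0..a}" "\<And>y. y \<in> {0..a} \<Longrightarrow> F x0 \<le> F y"
      using continuous_attains_inf[OF compact_Icc _ cont] a by auto
    define m where "m = F x0"
    have Fin: "F l \<in> {m..m + a}" if "l \<in> {0..a}" for l
    proof -
      have "\<bar>F l - F x0\<bar> \<le> 1 * \<bar>l - x0\<bar>" unfolding F_def by (rule Tp_param_lip[OF pl bf])
      also have "\<dots> \<le> a" using that x0(1) by auto
      finally show ?thesis using x0(2)[OF that] by (auto simp: m_def)
    qed
    interpret interval_bounded_random_variable \<sigma> F m "m + a"
    proof
      show "random_variable borel F" using Fm by simp
      show "AE x in \<sigma>. F x \<in> {m..m + a}" using AE0 by eventually_elim (rule Fin)
    qed
    have H: "(\<integral>\<^sup>+ x. exp (t * (F x - expectation F)) \<partial>\<sigma>) \<le> ennreal (exp (t\<^sup>2 * (m + a - m)\<^sup>2 / 8))"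
      by (rule Hoeffdings_lemma_nn_integral[OF t0])
    have ie: "integrable \<sigma> (\<lambda>x. exp (t * (F x - expectation F)))"
    proof (rule integrable_const_bound[where B="exp (t * (B - expectation F))"])
      show "AE x in \<sigma>. norm (exp (t * (F x - expectation F))) \<le> exp (t * (B - expectation F))"
      proof (rule AE_I2)
        fix x
        have "F x - expectation F \<le> B - expectation F" using FB[of x] by linarith
        then have "t * (F x - expectation F) \<le> t * (B - expectation F)" using t by (rule mult_left_mono)
        then show "norm (exp (t * (F x - expectation F))) \<le> exp (t * (B - expectation F))" by simp
      qed
    qed (use Fm in measurable)
    have "ennreal (\<integral>x. exp (t * (F x - expectation F)) \<partial>\<sigma>) = (\<integral>\<^sup>+ x. exp (t * (F x - expectation F)) \<partial>\<sigma>)"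
      by (rule nn_integral_eq_integral[symmetric, OF ie]) auto
    with H have "ennreal (\<integral>x. exp (t * (F x - expectation F)) \<partial>\<sigma>) \<le> ennreal (exp (t\<^sup>2 * a\<^sup>2 / 8))"
      by simp
    then have H2: "(\<integral>x. exp (t * (F x - expectation F)) \<partial>\<sigma>) \<le> exp (t\<^sup>2 * a\<^sup>2 / 8)"
      by (subst (asm) ennreal_le_iff) auto
    have "(\<integral>l. exp (t * F l) \<partial>\<sigma>) = (\<integral>x. exp (t * expectation F) * exp (t * (F x - expectation F)) \<partial>\<sigma>)"
      by (intro Bochner_Integration.integral_cong) (auto simp: algebra_simps simp flip: exp_add)
    also have "\<dots> = exp (t * expectation F) * (\<integral>x. exp (t * (F x - expectation F)) \<partial>\<sigma>)" by simp
    also have "\<dots> \<le> exp (t * expectation F) * exp (t\<^sup>2 * a\<^sup>2 / 8)" using H2 by simp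
    also have "\<dots> = exp (t * expectation F + t\<^sup>2 * a\<^sup>2 / 8)" by (simp add: exp_add)
    finally show ?thesis unfolding F_def .
  qed
qed

lemma mixture_laplace:
  fixes a :: real and \<sigma> :: "real measure"
  assumes a: "a > 0" and ps: "prob_space \<sigma>" and sb: "sets \<sigma> = sets borel" and sa: "emeasure \<sigma> {0..a} = 1"
    and mu: "\<And>k. pmf \<mu> k = (\<integral>l. poisson_weight l k \<partial>\<sigma>)"
    and lip: "lip1 f" and bf: "bnd f" and t: "0 \<le> t"
  shows "measure_pmf.expectation \<mu> (\<lambda>k. exp (t * f k))
          \<le> exp (t * measure_pmf.expectation \<mu> f + (a + a\<^sup>2 / 4) * psi t)"
proof -
  interpret prob_space \<sigma> by (rule ps)
  have AE0: "AE l in \<sigma>. l \<in> {0..a}" by (rule mix_basic[OF ps sb sa])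
  have pl: "plip 1 f" by (rule plip_lip1[OF lip])
  have bef: "bnd (\<lambda>k. exp (t * f k))" by (intro bnd_exp bnd_cmult bf)
  obtain B where B: "\<And>k. \<bar>f k\<bar> \<le> B" using bf by (auto simp: bnd_def)
  have Fm: "(\<lambda>l. Tp l f 0) \<in> borel_measurable \<sigma>" by (rule meas_sigma[OF sb Tp_param_meas[OF pl bf]])
  have ie: "integrable \<sigma> (\<lambda>l. exp (t * Tp l f 0))"
  proof (rule integrable_const_bound[where B="exp (t * B)"])
    show "AE x in \<sigma>. norm (exp (t * Tp x f 0)) \<le> exp (t * B)"
    proof (rule AE_I2)
      fix x
      have "\<bar>Tp x f 0\<bar> \<le> B" by (rule Tp_bound) (rule B)
      then have "Tp x f 0 \<le> B" by linarith
      then have "t * Tp x f 0 \<le> t * B" using t by (rule mult_left_mono)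
      then show "norm (exp (t * Tp x f 0)) \<le> exp (t * B)" by simp
    qed
  qed (use Fm in measurable)
  have "measure_pmf.expectation \<mu> (\<lambda>k. exp (t * f k)) = (\<integral>l. Tp l (\<lambda>k. exp (t * f k)) 0 \<partial>\<sigma>)"
    by (rule mix_expect[OF ps sb sa mu bef])
  also have "\<dots> \<le> (\<integral>l. exp (a * psi t) * exp (t * Tp l f 0) \<partial>\<sigma>)"
  proof (rule integral_mono_AE)
    show "integrable \<sigma> (\<lambda>l. Tp l (\<lambda>k. exp (t * f k)) 0)" by (rule Tp_integrable_sigma[OF ps sb bef])
    show "integrable \<sigma> (\<lambda>l. exp (a * psi t) * exp (t * Tp l f 0))" using ie by simp
    show "AE l in \<sigma>. Tp l (\<lambda>k. exp (t * f k)) 0 \<le> exp (a * psi t) * exp (t * Tp l f 0)"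
      using AE0
    proof eventually_elim
      case (elim l)
      have "Tp l (\<lambda>k. exp (t * f k)) 0 \<le> exp (t * Tp l f 0 + l * psi t)"
        by (rule pois_laplace[OF lip bf t]) (use elim in simp)
      also have "\<dots> \<le> exp (t * Tp l f 0 + a * psi t)"
        using elim psi_nonneg[of t] by (auto intro!: mult_right_mono)
      finally show ?case by (simp add: exp_add mult_ac)
    qed
  qed
  also have "\<dots> = exp (a * psi t) * (\<integral>l. exp (t * Tp l f 0) \<partial>\<sigma>)" by simp
  also have "\<dots> \<le> exp (a * psi t) * exp (t * (\<integral>l. Tp l f 0 \<partial>\<sigma>) + t\<^sup>2 * a\<^sup>2 / 8)"
    by (intro mult_left_mono hoeff_part[OF a ps sb sa lip bf t]) simp
  also have "(\<integral>l. Tp l f 0 \<partial>\<sigma>) = measure_pmf.expectation \<mu> f"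
    by (rule mix_expect[OF ps sb sa mu bf, symmetric])
  also have "exp (a * psi t) * exp (t * measure_pmf.expectation \<mu> f + t\<^sup>2 * a\<^sup>2 / 8)
      \<le> exp (t * measure_pmf.expectation \<mu> f + (a + a\<^sup>2 / 4) * psi t)"
  proof -
    have "t\<^sup>2 / 2 \<le> psi t" using exp_lower_Taylor_quadratic[OF t] by (simp add: psi_def)
    then have "a\<^sup>2 / 4 * (t\<^sup>2 / 2) \<le> a\<^sup>2 / 4 * psi t" by (intro mult_left_mono) auto
    then show ?thesis by (simp add: algebra_simps flip: exp_add)
  qed
  finally show ?thesis .
qed


lemma gibbs:
  fixes \<nu> \<mu> :: "nat pmf" and G :: "nat \<Rightarrow> real"
  assumes GC: "\<And>k. \<bar>G k\<bar> \<le> C"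
    and Z: "measure_pmf.expectation \<mu> (\<lambda>k. exp (G k)) \<le> 1"
  shows "ereal (measure_pmf.expectation \<nu> G) \<le> rel_entropy \<nu> \<mu>"
proof (cases "\<forall>k. pmf \<mu> k = 0 \<longrightarrow> pmf \<nu> k = 0")
  case False then have "rel_entropy \<nu> \<mu> = \<infinity>" unfolding rel_entropy_def by argo
  then show ?thesis by simp
next
  case True
  define f where "f k = ln (pmf \<nu> k / pmf \<mu> k)" for k
  define P where "P = (\<integral>\<^sup>+ k. ennreal (f k) \<partial>measure_pmf \<nu>)"
  define N where "N = (\<integral>\<^sup>+ k. ennreal (- f k) \<partial>measure_pmf \<nu>)"
  have rel: "rel_entropy \<nu> \<mu> = enn2ereal P - enn2ereal N"
    using True by (simp add: rel_entropy_def P_def N_def f_def Let_def)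
  have C0: "0 \<le> C" using GC[of 0] by simp
  have Gb: "True" "\<And>k. - C \<le> G k" "\<And>k. G k \<le> C"
    using GC by (auto, metis abs_le_D2 minus_le_iff, metis abs_le_D1)
  have iG: "integrable (measure_pmf p) G" for p
    by (rule measure_pmf.integrable_const_bound[where B=C]) (use GC in auto)
  have ieG: "integrable (measure_pmf p) (\<lambda>k. exp (G k))" for p
    by (rule measure_pmf.integrable_const_bound[where B="exp C"]) (use Gb in auto)
  have pw: "pmf \<nu> k * (G k + C + 1) + pmf \<nu> k * max (- f k) 0
      \<le> pmf \<nu> k * max (f k) 0 + pmf \<mu> k * exp (G k) + pmf \<nu> k * C" for k
  proof (cases "pmf \<nu> k = 0")
    case True then show ?thesis by simp
  next
    case False
    then have nu: "pmf \<nu> k > 0" using pmf_nonneg[of \<nu> k] by linarith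
    have mu: "pmf \<mu> k > 0" using \<open>\<forall>k. _\<close> nu pmf_nonneg[of \<mu> k] by (metis less_eq_real_def less_irrefl)
    have x: "0 < pmf \<mu> k * exp (G k) / pmf \<nu> k" using nu mu by simp
    have "ln (pmf \<mu> k * exp (G k) / pmf \<nu> k) \<le> pmf \<mu> k * exp (G k) / pmf \<nu> k - 1"
      by (rule ln_le_minus_one[OF x])
    moreover have "ln (pmf \<mu> k * exp (G k) / pmf \<nu> k) = G k - f k"
      using nu mu by (simp add: f_def ln_div ln_mult)
    ultimately have "G k - f k + 1 \<le> pmf \<mu> k * exp (G k) / pmf \<nu> k" by simp
    then have "pmf \<nu> k * (G k - f k + 1) \<le> pmf \<mu> k * exp (G k)"
      using nu by (simp add: field_simps)
    moreover have "max (f k) 0 - max (- f k) 0 = f k" by auto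
    ultimately show ?thesis by (simp add: algebra_simps)
  qed
  have pwe: "ennreal (pmf \<nu> k * (G k + C + 1)) + ennreal (pmf \<nu> k) * ennreal (- f k)
      \<le> ennreal (pmf \<nu> k) * ennreal (f k) + ennreal (pmf \<mu> k * exp (G k)) + ennreal (pmf \<nu> k * C)" for k
  proof -
    have nn1: "0 \<le> pmf \<nu> k * (G k + C + 1)" using Gb(2)[of k] by simp
    have e1: "ennreal (pmf \<nu> k) * ennreal (- f k) = ennreal (pmf \<nu> k * max (- f k) 0)"
      by (cases "0 \<le> - f k") (auto simp: ennreal_mult' ennreal_neg max_def)
    have e2: "ennreal (pmf \<nu> k) * ennreal (f k) = ennreal (pmf \<nu> k * max (f k) 0)"
      by (cases "0 \<le> f k") (auto simp: ennreal_mult' ennreal_neg max_def)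
    have "ennreal (pmf \<nu> k * (G k + C + 1)) + ennreal (pmf \<nu> k * max (- f k) 0)
        = ennreal (pmf \<nu> k * (G k + C + 1) + pmf \<nu> k * max (- f k) 0)"
      using nn1 by (subst ennreal_plus) auto
    also have "\<dots> \<le> ennreal (pmf \<nu> k * max (f k) 0 + pmf \<mu> k * exp (G k) + pmf \<nu> k * C)"
      using pw by (rule ennreal_leI)
    also have "\<dots> = ennreal (pmf \<nu> k * max (f k) 0) + ennreal (pmf \<mu> k * exp (G k)) + ennreal (pmf \<nu> k * C)"
      using C0 by (subst ennreal_plus; simp)+
    finally show ?thesis using e1 e2 by simp
  qed
  let ?c = "count_space (UNIV :: nat set)"
  have "(\<integral>\<^sup>+ k. ennreal (pmf \<nu> k * (G k + C + 1)) \<partial>?c) + (\<integral>\<^sup>+ k. ennreal (pmf \<nu> k) * ennreal (- f k) \<partial>?c)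
      = (\<integral>\<^sup>+ k. ennreal (pmf \<nu> k * (G k + C + 1)) + ennreal (pmf \<nu> k) * ennreal (- f k) \<partial>?c)"
    by (rule nn_integral_add[symmetric]) auto
  also have "\<dots> \<le> (\<integral>\<^sup>+ k. ennreal (pmf \<nu> k) * ennreal (f k) + ennreal (pmf \<mu> k * exp (G k)) + ennreal (pmf \<nu> k * C) \<partial>?c)"
    by (rule nn_integral_mono) (rule pwe)
  also have "\<dots> = (\<integral>\<^sup>+ k. ennreal (pmf \<nu> k) * ennreal (f k) + ennreal (pmf \<mu> k * exp (G k)) \<partial>?c)
      + (\<integral>\<^sup>+ k. ennreal (pmf \<nu> k * C) \<partial>?c)"
    by (rule nn_integral_add) auto
  also have "(\<integral>\<^sup>+ k. ennreal (pmf \<nu> k) * ennreal (f k) + ennreal (pmf \<mu> k * exp (G k)) \<partial>?c)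
      = (\<integral>\<^sup>+ k. ennreal (pmf \<nu> k) * ennreal (f k) \<partial>?c) + (\<integral>\<^sup>+ k. ennreal (pmf \<mu> k * exp (G k)) \<partial>?c)"
    by (rule nn_integral_add) auto
  finally have ineq: "(\<integral>\<^sup>+ k. ennreal (pmf \<nu> k * (G k + C + 1)) \<partial>?c) + N
      \<le> P + (\<integral>\<^sup>+ k. ennreal (pmf \<mu> k * exp (G k)) \<partial>?c) + (\<integral>\<^sup>+ k. ennreal (pmf \<nu> k * C) \<partial>?c)"
    by (simp add: P_def N_def nn_integral_measure_pmf)
  have I1: "(\<integral>\<^sup>+ k. ennreal (pmf \<nu> k * (G k + C + 1)) \<partial>?c) = ennreal (measure_pmf.expectation \<nu> G + C + 1)"
  proof -
    have "(\<integral>\<^sup>+ k. ennreal (pmf \<nu> k * (G k + C + 1)) \<partial>?c) = (\<integral>\<^sup>+ k. ennreal (G k + C + 1) \<partial>measure_pmf \<nu>)"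
      using Gb(2) by (simp add: nn_integral_measure_pmf ennreal_mult')
    also have "\<dots> = ennreal (measure_pmf.expectation \<nu> (\<lambda>k. G k + C + 1))"
    proof (rule nn_integral_eq_integral)
      show "integrable (measure_pmf \<nu>) (\<lambda>k. G k + C + 1)" using iG by auto
      show "AE k in measure_pmf \<nu>. 0 \<le> G k + C + 1" using Gb(2) by (intro AE_I2) (smt (verit))
    qed
    also have "measure_pmf.expectation \<nu> (\<lambda>k. G k + C + 1) = measure_pmf.expectation \<nu> G + C + 1"
      using iG by (simp add: Bochner_Integration.integral_add)
    finally show ?thesis .
  qed
  have I2: "(\<integral>\<^sup>+ k. ennreal (pmf \<mu> k * exp (G k)) \<partial>?c) \<le> 1"
  proof -
    have "(\<integral>\<^sup>+ k. ennreal (pmf \<mu> k * exp (G k)) \<partial>?c) = (\<integral>\<^sup>+ k. ennreal (exp (G k)) \<partial>measure_pmf \<mu>)"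
      by (simp add: nn_integral_measure_pmf ennreal_mult')
    also have "\<dots> = ennreal (measure_pmf.expectation \<mu> (\<lambda>k. exp (G k)))"
      by (rule nn_integral_eq_integral) (use ieG in auto)
    also have "\<dots> \<le> 1" using Z by simp
    finally show ?thesis .
  qed
  have I3: "(\<integral>\<^sup>+ k. ennreal (pmf \<nu> k * C) \<partial>?c) = ennreal C"
  proof -
    have "(\<integral>\<^sup>+ k. ennreal (pmf \<nu> k * C) \<partial>?c) = (\<integral>\<^sup>+ k. ennreal (pmf \<nu> k) * ennreal C \<partial>?c)"
      using C0 by (simp add: ennreal_mult')
    also have "\<dots> = (\<integral>\<^sup>+ k. ennreal C \<partial>measure_pmf \<nu>)" by (simp only: nn_integral_measure_pmf)
    also have "\<dots> = ennreal C" by (simp add: measure_pmf.emeasure_space_1)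
    finally show ?thesis .
  qed
  have Nfin: "N \<le> 1"
  proof -
    have "N = (\<integral>\<^sup>+ k. ennreal (pmf \<nu> k) * ennreal (- f k) \<partial>?c)" by (simp add: N_def nn_integral_measure_pmf)
    also have "\<dots> \<le> (\<integral>\<^sup>+ k. ennreal (pmf \<mu> k) \<partial>?c)"
    proof (rule nn_integral_mono)
      fix k
      show "ennreal (pmf \<nu> k) * ennreal (- f k) \<le> ennreal (pmf \<mu> k)"
      proof (cases "pmf \<nu> k = 0")
        case True then show ?thesis by simp
      next
        case False
        then have nu: "pmf \<nu> k > 0" using pmf_nonneg[of \<nu> k] by linarith
        have mu: "pmf \<mu> k > 0" using \<open>\<forall>k. _\<close> nu pmf_nonneg[of \<mu> k] by (metis less_eq_real_def less_irrefl)
        have "- f k = ln (pmf \<mu> k / pmf \<nu> k)" using nu mu by (simp add: f_def ln_div)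
        also have "\<dots> \<le> pmf \<mu> k / pmf \<nu> k - 1" using nu mu by (intro ln_le_minus_one) simp
        finally have "pmf \<nu> k * max (- f k) 0 \<le> pmf \<mu> k"
          using nu mu by (auto simp: field_simps max_def)
        then have "ennreal (pmf \<nu> k * max (- f k) 0) \<le> ennreal (pmf \<mu> k)" by (rule ennreal_leI)
        moreover have "ennreal (pmf \<nu> k) * ennreal (- f k) = ennreal (pmf \<nu> k * max (- f k) 0)"
          by (cases "0 \<le> - f k") (auto simp: ennreal_mult' ennreal_neg max_def)
        ultimately show ?thesis by simp
      qed
    qed
    also have "\<dots> = 1"
      using nn_integral_measure_pmf[of \<mu> "\<lambda>_. 1"] by (simp add: measure_pmf.emeasure_space_1)
    finally show ?thesis .
  qed
  then have "N < top" using ennreal_one_less_top by (rule le_less_trans)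
  then obtain n where n: "N = ennreal n" "0 \<le> n" by (auto simp: less_top_ennreal)
  show ?thesis
  proof (cases "P = \<infinity>")
    case True then show ?thesis using n by (simp add: rel)
  next
    case False
    then obtain p where p: "P = ennreal p" "0 \<le> p" by (metis ennreal_cases infinity_ennreal_def)
    obtain z where z: "(\<integral>\<^sup>+ k. ennreal (pmf \<mu> k * exp (G k)) \<partial>?c) = ennreal z" "0 \<le> z" "z \<le> 1"
    proof -
      have "(\<integral>\<^sup>+ k. ennreal (pmf \<mu> k * exp (G k)) \<partial>?c) < top" using I2 ennreal_one_less_top by (rule le_less_trans)
      then obtain z where "(\<integral>\<^sup>+ k. ennreal (pmf \<mu> k * exp (G k)) \<partial>?c) = ennreal z" "0 \<le> z" by (auto simp: less_top_ennreal)
      moreover have "z \<le> 1" using I2 calculation by (simp add: ennreal_le_1)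
      ultimately show ?thesis using that by blast
    qed
    have nnE: "0 \<le> measure_pmf.expectation \<nu> G + C + 1"
    proof -
      have "measure_pmf.expectation \<nu> (\<lambda>_. - C) \<le> measure_pmf.expectation \<nu> G"
        by (intro integral_mono iG) (use Gb in auto)
      then show ?thesis by simp
    qed
    have "ennreal (measure_pmf.expectation \<nu> G + C + 1 + n) \<le> ennreal (p + z + C)"
      using ineq unfolding I1 I3 n p z using nnE n(2) p(2) z(2) C0 by (simp add: ennreal_plus[symmetric] del: ennreal_plus)
    then have "measure_pmf.expectation \<nu> G + C + 1 + n \<le> p + z + C"
      using p(2) z(2) C0 by (subst (asm) ennreal_le_iff) auto
    then have "measure_pmf.expectation \<nu> G \<le> p - n" using z(3) by linarith
    then show ?thesis using n p by (simp add: rel)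
  qed
qed


definition Fc :: "nat pmf \<Rightarrow> nat \<Rightarrow> real" where
  "Fc p k = measure_pmf.prob p {..k}"

definition Fp :: "nat pmf \<Rightarrow> nat \<Rightarrow> real" where
  "Fp p i = (if i = 0 then 0 else Fc p (i - 1))"

definition Q :: "nat pmf \<Rightarrow> real \<Rightarrow> nat" where
  "Q p u = (LEAST i. u < Fc p i)"

lemma Fc_mono: "i \<le> j \<Longrightarrow> Fc p i \<le> Fc p j"
  unfolding Fc_def by (intro measure_pmf.finite_measure_mono) auto

lemma Fc_nonneg: "0 \<le> Fc p i" by (simp add: Fc_def)
lemma Fc_le1: "Fc p i \<le> 1" by (simp add: Fc_def)

lemma Fp_nonneg: "0 \<le> Fp p i" by (simp add: Fp_def Fc_nonneg)

lemma Fp_le_Fc: "Fp p i \<le> Fc p i"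
  by (cases i) (auto simp: Fp_def Fc_nonneg Fc_mono)

lemma Fc_minus_Fp: "Fc p i - Fp p i = pmf p i"
proof (cases i)
  case 0 then show ?thesis by (simp add: Fp_def Fc_def measure_pmf_single)
next
  case (Suc j)
  have e: "{..Suc j} = {..j} \<union> {Suc j}" by auto
  have "measure_pmf.prob p ({..j} \<union> {Suc j}) = measure_pmf.prob p {..j} + measure_pmf.prob p {Suc j}"
    by (rule measure_pmf.finite_measure_Union) auto
  then have "Fc p (Suc j) = Fc p j + pmf p (Suc j)"
    unfolding Fc_def e by (simp add: measure_pmf_single)
  then show ?thesis using Suc by (simp add: Fp_def)
qed

lemma Fc_lim: "Fc p \<longlonglongrightarrow> 1"
proof -
  have "(\<lambda>i. measure_pmf.prob p {..i}) \<longlonglongrightarrow> measure_pmf.prob p (\<Union>i. {..i})"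
    by (rule measure_pmf.finite_Lim_measure_incseq) (auto simp: incseq_def)
  moreover have "(\<Union>i. {..i::nat}) = UNIV" by auto
  ultimately show ?thesis by (simp add: Fc_def[abs_def])
qed

lemma Fc_ex: "u < 1 \<Longrightarrow> \<exists>i. u < Fc p i"
  using order_tendstoD(1)[OF Fc_lim] by (metis eventually_sequentially order_refl)

lemma Q_le: assumes "u < 1" shows "Q p u \<le> k \<longleftrightarrow> u < Fc p k"
proof
  assume "Q p u \<le> k"
  moreover have "u < Fc p (Q p u)" unfolding Q_def by (rule LeastI_ex[OF Fc_ex[OF assms]])
  ultimately show "u < Fc p k" using Fc_mono by (metis order_less_le_trans)
next
  assume "u < Fc p k" then show "Q p u \<le> k" unfolding Q_def by (rule Least_le)
qed

lemma Q_eq: assumes "0 \<le> u" "u < 1" shows "Q p u = i \<longleftrightarrow> Fp p i \<le> u \<and> u < Fc p i"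
proof (cases i)
  case 0 then show ?thesis using Q_le[OF assms(2), of p 0] assms(1) by (auto simp: Fp_def)
next
  case (Suc j)
  have "Q p u = i \<longleftrightarrow> Q p u \<le> i \<and> \<not> Q p u \<le> j" using Suc by auto
  also have "\<dots> \<longleftrightarrow> u < Fc p i \<and> \<not> u < Fc p j" using Q_le[OF assms(2)] by simp
  finally show ?thesis using Suc by (auto simp: Fp_def)
qed

lemma nat_abs_sum: "ennreal \<bar>real a - real b\<bar> = (\<Sum>k. ennreal \<bar>(if a \<le> k then 1 else 0) - (if b \<le> k then 1 else (0::real))\<bar>)"
proof -
  have fin: "(\<Sum>k. ennreal \<bar>(if a \<le> k then 1 else 0) - (if b \<le> k then 1 else (0::real))\<bar>)
      = (\<Sum>k\<in>{min a b..<max a b}. ennreal \<bar>(if a \<le> k then 1 else 0) - (if b \<le> k then 1 else (0::real))\<bar>)"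
    by (rule suminf_finite) auto
  also have "\<dots> = (\<Sum>k\<in>{min a b..<max a b}. 1)"
    by (rule sum.cong) auto
  also have "\<dots> = ennreal \<bar>real a - real b\<bar>"
    by (simp add: of_nat_diff max_def min_def ennreal_of_nat_eq_real_of_nat)
  finally show ?thesis ..
qed


abbreviation U :: "real measure" where "U \<equiv> restrict_space lborel {0..<1}"

lemma U_Om: "{0..<1::real} \<inter> space lborel \<in> sets lborel" by simp

lemma space_U: "space U = {0..<1}" by (simp add: space_restrict_space)

lemma U_prob: "prob_space U"
proof (rule prob_spaceI)
  show "emeasure U (space U) = 1"
    unfolding space_U by (subst emeasure_restrict_space[OF U_Om]) auto
qed

lemma sets_U_iff: "A \<in> sets U \<longleftrightarrow> A \<subseteq> {0..<1} \<and> A \<in> sets borel"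
  using sets_restrict_space_iff[OF U_Om, of A] by simp

lemma measure_U: "A \<subseteq> {0..<1} \<Longrightarrow> measure U A = measure lborel A"
  by (rule measure_restrict_space[OF U_Om])

lemma emeasure_U: "A \<subseteq> {0..<1} \<Longrightarrow> emeasure U A = emeasure lborel A"
  by (rule emeasure_restrict_space[OF U_Om])

definition Phi :: "nat pmf \<Rightarrow> nat pmf \<Rightarrow> real \<Rightarrow> nat \<times> nat" where
  "Phi \<nu> \<mu> u = (Q \<nu> u, Q \<mu> u)"

lemma Q_prop: "0 \<le> u \<Longrightarrow> u < 1 \<Longrightarrow> Fp p (Q p u) \<le> u \<and> u < Fc p (Q p u)"
  using Q_eq[of u p "Q p u"] by simp

lemma Phi_pre: "Phi \<nu> \<mu> -` {(i, j)} \<inter> space U = {0..<1} \<inter> {Fp \<nu> i..<Fc \<nu> i} \<inter> {Fp \<mu> j..<Fc \<mu> j}"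
  unfolding space_U Phi_def by (auto simp: Q_eq Q_prop)

lemma Phi_meas: "Phi \<nu> \<mu> \<in> measurable U (count_space UNIV)"
  unfolding measurable_count_space_eq2_countable
proof safe
  fix i j
  show "Phi \<nu> \<mu> -` {(i, j)} \<inter> space U \<in> sets U"
    unfolding Phi_pre sets_U_iff by auto
qed auto

definition Mc :: "nat pmf \<Rightarrow> nat pmf \<Rightarrow> (nat \<times> nat) measure" where
  "Mc \<nu> \<mu> = distr U (count_space UNIV) (Phi \<nu> \<mu>)"

definition cpl :: "nat pmf \<Rightarrow> nat pmf \<Rightarrow> (nat \<times> nat) pmf" where
  "cpl \<nu> \<mu> = Abs_pmf (Mc \<nu> \<mu>)"

lemma measure_cpl: "measure_pmf (cpl \<nu> \<mu>) = Mc \<nu> \<mu>"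
proof -
  have ps: "prob_space (Mc \<nu> \<mu>)" unfolding Mc_def
    by (rule prob_space.prob_space_distr[OF U_prob Phi_meas])
  have se: "sets (Mc \<nu> \<mu>) = UNIV" by (simp add: Mc_def)
  interpret prob_space "Mc \<nu> \<mu>" by (rule ps)
  have "AE x in Mc \<nu> \<mu>. x \<in> UNIV" by simp
  then have ae: "AE x in Mc \<nu> \<mu>. measure (Mc \<nu> \<mu>) {x} \<noteq> 0"
    using AE_support_countable[OF se] by (metis countableI_type)
  show ?thesis unfolding cpl_def by (rule Abs_pmf_inverse) (use ps se ae in blast)
qed

lemma measure_lborel_Ico': "a \<le> b \<Longrightarrow> measure lborel {a..<b} = b - a"
  by (simp add: measure_def)


lemma cpl_fst: "map_pmf fst (cpl \<nu> \<mu>) = \<nu>"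
proof (rule pmf_eqI)
  fix i
  have "pmf (map_pmf fst (cpl \<nu> \<mu>)) i = measure (Mc \<nu> \<mu>) (fst -` {i})"
    by (simp add: pmf_map measure_cpl)
  also have "\<dots> = measure U (Phi \<nu> \<mu> -` (fst -` {i}) \<inter> space U)"
    unfolding Mc_def by (rule measure_distr[OF Phi_meas]) simp
  also have "Phi \<nu> \<mu> -` (fst -` {i}) \<inter> space U = {Fp \<nu> i..<Fc \<nu> i}"
    unfolding space_U Phi_def using Fp_nonneg[of \<nu> i] Fc_le1[of \<nu> i] by (auto simp: Q_eq Q_prop)
  also have "measure U {Fp \<nu> i..<Fc \<nu> i} = Fc \<nu> i - Fp \<nu> i"
    using Fp_nonneg[of \<nu> i] Fc_le1[of \<nu> i] Fp_le_Fc[of \<nu> i]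
    by (subst measure_U) (auto simp: measure_lborel_Ico')
  finally show "pmf (map_pmf fst (cpl \<nu> \<mu>)) i = pmf \<nu> i" by (simp add: Fc_minus_Fp)
qed

lemma cpl_snd: "map_pmf snd (cpl \<nu> \<mu>) = \<mu>"
proof (rule pmf_eqI)
  fix i
  have "pmf (map_pmf snd (cpl \<nu> \<mu>)) i = measure (Mc \<nu> \<mu>) (snd -` {i})"
    by (simp add: pmf_map measure_cpl)
  also have "\<dots> = measure U (Phi \<nu> \<mu> -` (snd -` {i}) \<inter> space U)"
    unfolding Mc_def by (rule measure_distr[OF Phi_meas]) simp
  also have "Phi \<nu> \<mu> -` (snd -` {i}) \<inter> space U = {Fp \<mu> i..<Fc \<mu> i}"
    unfolding space_U Phi_def using Fp_nonneg[of \<mu> i] Fc_le1[of \<mu> i] by (auto simp: Q_eq Q_prop)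
  also have "measure U {Fp \<mu> i..<Fc \<mu> i} = Fc \<mu> i - Fp \<mu> i"
    using Fp_nonneg[of \<mu> i] Fc_le1[of \<mu> i] Fp_le_Fc[of \<mu> i]
    by (subst measure_U) (auto simp: measure_lborel_Ico')
  finally show "pmf (map_pmf snd (cpl \<nu> \<mu>)) i = pmf \<mu> i" by (simp add: Fc_minus_Fp)
qed

lemma ind_diff: "ennreal \<bar>(if (u::real) < a then 1 else 0) - (if u < b then 1 else (0::real))\<bar> = indicator {min a b..<max a b} u"
  by (auto simp: indicator_def min_def max_def)

lemma cpl_cost:
  "(\<integral>\<^sup>+ xy. ennreal \<bar>real (fst xy) - real (snd xy)\<bar> \<partial>measure_pmf (cpl \<nu> \<mu>))
     = (\<Sum>k. ennreal \<bar>Fc \<nu> k - Fc \<mu> k\<bar>)"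
proof -
  define A where "A k = {min (Fc \<nu> k) (Fc \<mu> k)..<max (Fc \<nu> k) (Fc \<mu> k)}" for k
  have A01: "A k \<subseteq> {0..<1}" for k
    unfolding A_def using Fc_nonneg[of \<nu> k] Fc_nonneg[of \<mu> k] Fc_le1[of \<nu> k] Fc_le1[of \<mu> k] by auto
  have As: "A k \<in> sets U" for k using A01[of k] by (auto simp: sets_U_iff A_def)
  have "(\<integral>\<^sup>+ xy. ennreal \<bar>real (fst xy) - real (snd xy)\<bar> \<partial>measure_pmf (cpl \<nu> \<mu>))
      = (\<integral>\<^sup>+ u. ennreal \<bar>real (Q \<nu> u) - real (Q \<mu> u)\<bar> \<partial>U)"
    unfolding measure_cpl Mc_def by (subst nn_integral_distr[OF Phi_meas]) (auto simp: Phi_def)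
  also have "\<dots> = (\<integral>\<^sup>+ u. (\<Sum>k. indicator (A k) u) \<partial>U)"
  proof (rule nn_integral_cong)
    fix u assume "u \<in> space U"
    then have u: "0 \<le> u" "u < 1" by (auto simp: space_U)
    show "ennreal \<bar>real (Q \<nu> u) - real (Q \<mu> u)\<bar> = (\<Sum>k. indicator (A k) u)"
      unfolding nat_abs_sum A_def ind_diff[symmetric] using Q_le[OF u(2)] by simp
  qed
  also have "\<dots> = (\<Sum>k. \<integral>\<^sup>+ u. indicator (A k) u \<partial>U)"
    by (rule nn_integral_suminf) (use As in auto)
  also have "\<dots> = (\<Sum>k. ennreal \<bar>Fc \<nu> k - Fc \<mu> k\<bar>)"
  proof (rule suminf_cong)
    fix k
    have "(\<integral>\<^sup>+ u. indicator (A k) u \<partial>U) = emeasure U (A k)" by (rule nn_integral_indicator[OF As])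
    also have "\<dots> = emeasure lborel (A k)" by (rule emeasure_U[OF A01])
    also have "\<dots> = ennreal \<bar>Fc \<nu> k - Fc \<mu> k\<bar>" unfolding A_def by (simp add: max_def min_def)
    finally show "(\<integral>\<^sup>+ u. indicator (A k) u \<partial>U) = ennreal \<bar>Fc \<nu> k - Fc \<mu> k\<bar>" .
  qed
  finally show ?thesis .
qed

lemma W1_le: "W1 \<nu> \<mu> \<le> (\<Sum>k. ennreal \<bar>Fc \<nu> k - Fc \<mu> k\<bar>)"
proof -
  have "cpl \<nu> \<mu> \<in> couplings \<nu> \<mu>" by (simp add: couplings_def cpl_fst cpl_snd)
  then show ?thesis unfolding W1_def cpl_cost[symmetric] by (rule INF_lower)
qed


definition eps :: "nat pmf \<Rightarrow> nat pmf \<Rightarrow> nat \<Rightarrow> real" where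
  "eps \<nu> \<mu> j = sgn (Fc \<mu> j - Fc \<nu> j)"

definition fN :: "nat pmf \<Rightarrow> nat pmf \<Rightarrow> nat \<Rightarrow> nat \<Rightarrow> real" where
  "fN \<nu> \<mu> N k = (\<Sum>j<N. eps \<nu> \<mu> j * (if j < k then 1 else 0))"

definition WN :: "nat pmf \<Rightarrow> nat pmf \<Rightarrow> nat \<Rightarrow> real" where
  "WN \<nu> \<mu> N = (\<Sum>j<N. \<bar>Fc \<nu> j - Fc \<mu> j\<bar>)"

lemma eps_abs: "\<bar>eps \<nu> \<mu> j\<bar> \<le> 1"
  by (simp add: eps_def sgn_real_def)

lemma fN_lip1: "lip1 (fN \<nu> \<mu> N)"
  unfolding lip1_def
proof
  fix k
  have "fN \<nu> \<mu> N (Suc k) - fN \<nu> \<mu> N k = (\<Sum>j<N. eps \<nu> \<mu> j * ((if j < Suc k then 1 else 0) - (if j < k then 1 else 0)))"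
    unfolding fN_def by (simp add: sum_subtractf[symmetric] algebra_simps)
  also have "\<dots> = (\<Sum>j\<in>{..<N} \<inter> {k}. eps \<nu> \<mu> j)"
    by (rule sum.mono_neutral_cong_right) (auto split: if_splits)
  finally show "\<bar>fN \<nu> \<mu> N (Suc k) - fN \<nu> \<mu> N k\<bar> \<le> 1"
    by (cases "k < N") (auto simp: eps_abs)
qed

lemma fN_bnd: "bnd (fN \<nu> \<mu> N)"
  unfolding bnd_def
proof (intro exI allI)
  fix k
  have "\<bar>fN \<nu> \<mu> N k\<bar> \<le> (\<Sum>j<N. \<bar>eps \<nu> \<mu> j * (if j < k then 1 else 0)\<bar>)"
    unfolding fN_def by (rule sum_abs)
  also have "\<dots> \<le> (\<Sum>j<N. 1)" by (intro sum_mono) (auto simp: eps_abs)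
  finally show "\<bar>fN \<nu> \<mu> N k\<bar> \<le> real N" by simp
qed

lemma E_fN: "measure_pmf.expectation p (fN \<nu> \<mu> N) = (\<Sum>j<N. eps \<nu> \<mu> j * (1 - Fc p j))"
proof -
  have "measure_pmf.expectation p (fN \<nu> \<mu> N) = (\<Sum>j<N. measure_pmf.expectation p (\<lambda>k. eps \<nu> \<mu> j * indicator {j<..} k))"
  proof -
    have e: "fN \<nu> \<mu> N = (\<lambda>k. \<Sum>j<N. eps \<nu> \<mu> j * indicator {j<..} k)"
      by (rule ext) (unfold fN_def, rule sum.cong, auto simp: indicator_def)
    have bi: "bnd (indicator {j<..} :: nat \<Rightarrow> real)" for j
      unfolding bnd_def by (rule exI[of _ 1]) (auto simp: indicator_def)
    show ?thesis unfolding e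
      by (rule Bochner_Integration.integral_sum) (intro integrable_mult_right bnd_integrable' bi)
  qed
  also have "\<dots> = (\<Sum>j<N. eps \<nu> \<mu> j * (1 - Fc p j))"
  proof (rule sum.cong)
    fix j
    have "measure_pmf.prob p {j<..} = measure_pmf.prob p (UNIV - {..j})" by (metis Compl_atMost Compl_eq_Diff_UNIV)
    also have "\<dots> = 1 - Fc p j" unfolding Fc_def using measure_pmf.prob_compl[of "{..j}" p] by simp
    finally show "measure_pmf.expectation p (\<lambda>k. eps \<nu> \<mu> j * indicator {j<..} k) = eps \<nu> \<mu> j * (1 - Fc p j)"
      by simp
  qed simp
  finally show ?thesis .
qed

lemma diff_fN: "measure_pmf.expectation \<nu> (fN \<nu> \<mu> N) - measure_pmf.expectation \<mu> (fN \<nu> \<mu> N) = WN \<nu> \<mu> N"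
proof -
  have "eps \<nu> \<mu> j * (1 - Fc \<nu> j) - eps \<nu> \<mu> j * (1 - Fc \<mu> j) = \<bar>Fc \<nu> j - Fc \<mu> j\<bar>" for j
    unfolding eps_def by (auto simp: sgn_real_def algebra_simps)
  then show ?thesis unfolding E_fN WN_def by (simp add: sum_subtractf[symmetric])
qed

lemma WN_nonneg: "0 \<le> WN \<nu> \<mu> N" unfolding WN_def by (simp add: sum_nonneg)

lemma h_c_formula:
  assumes c: "c > 0" and W: "0 \<le> W"
  shows "ln (1 + W / c) * W - c * psi (ln (1 + W / c)) = h_c c W"
proof -
  have p: "0 < 1 + W / c" using c W by (simp add: add_pos_nonneg)
  define L where "L = ln (1 + W / c)"
  have e: "exp L = 1 + W / c" using p by (simp add: L_def)
  have "L * W - c * psi L = L * W - c * (W / c) + c * L" by (simp add: psi_def e algebra_simps)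
  also have "\<dots> = (c + W) * L - W" using c by (simp add: algebra_simps)
  also have "h_c c W = (c + W) * L - W"
    unfolding h_c_def h_fun_def L_def using c by (simp add: field_simps)
  finally show ?thesis unfolding L_def by simp
qed

lemma h_bound_N:
  fixes a :: real and \<sigma> :: "real measure"
  assumes a: "a > 0" and ps: "prob_space \<sigma>" and sb: "sets \<sigma> = sets borel" and sa: "emeasure \<sigma> {0..a} = 1"
    and mu: "\<And>k. pmf \<mu> k = (\<integral>l. poisson_weight l k \<partial>\<sigma>)"
  shows "ereal (h_c (a + a\<^sup>2 / 4) (WN \<nu> \<mu> N)) \<le> rel_entropy \<nu> \<mu>"
proof -
  define c where "c = a + a\<^sup>2 / 4"
  have c: "c > 0" using a by (simp add: c_def add_pos_nonneg)
  define W where "W = WN \<nu> \<mu> N"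
  have W: "0 \<le> W" by (simp add: W_def WN_nonneg)
  define t where "t = ln (1 + W / c)"
  have t: "0 \<le> t" using c W by (simp add: t_def)
  define f where "f = fN \<nu> \<mu> N"
  define m where "m = measure_pmf.expectation \<mu> f"
  define G where "G k = t * (f k - m) - c * psi t" for k
  obtain B where B: "\<And>k. \<bar>f k\<bar> \<le> B" using fN_bnd[of \<nu> \<mu> N] by (auto simp: bnd_def f_def)
  have GC: "\<bar>G k\<bar> \<le> t * (B + \<bar>m\<bar>) + c * psi t" for k
  proof -
    have "\<bar>G k\<bar> \<le> \<bar>t * (f k - m)\<bar> + \<bar>c * psi t\<bar>" unfolding G_def by (rule abs_triangle_ineq4)
    also have "\<bar>t * (f k - m)\<bar> \<le> t * (B + \<bar>m\<bar>)"
    proof -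
      have "\<bar>f k - m\<bar> \<le> B + \<bar>m\<bar>" using B[of k] abs_triangle_ineq4[of "f k" m] by linarith
      then show ?thesis unfolding abs_mult abs_of_nonneg[OF t] by (rule mult_left_mono[OF _ t])
    qed
    also have "\<bar>c * psi t\<bar> = c * psi t" using c psi_nonneg[of t] by simp
    finally show ?thesis by simp
  qed
  have Z: "measure_pmf.expectation \<mu> (\<lambda>k. exp (G k)) \<le> 1"
  proof -
    have "measure_pmf.expectation \<mu> (\<lambda>k. exp (G k)) = exp (- t * m - c * psi t) * measure_pmf.expectation \<mu> (\<lambda>k. exp (t * f k))"
    proof -
      have "(\<lambda>k. exp (G k)) = (\<lambda>k. exp (- t * m - c * psi t) * exp (t * f k))"
        unfolding G_def by (auto simp: fun_eq_iff algebra_simps simp flip: exp_add)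
      then show ?thesis by simp
    qed
    also have "\<dots> \<le> exp (- t * m - c * psi t) * exp (t * m + c * psi t)"
      unfolding m_def c_def f_def
      by (intro mult_left_mono mixture_laplace[OF a ps sb sa mu fN_lip1 fN_bnd t]) simp
    also have "\<dots> = 1" by (simp flip: exp_add)
    finally show ?thesis .
  qed
  have "ereal (measure_pmf.expectation \<nu> G) \<le> rel_entropy \<nu> \<mu>" by (rule gibbs[OF GC Z])
  moreover have "measure_pmf.expectation \<nu> G = h_c c W"
  proof -
    have iF: "integrable (measure_pmf \<nu>) f" unfolding f_def by (rule bnd_integrable'[OF fN_bnd])
    have "measure_pmf.expectation \<nu> G = t * (measure_pmf.expectation \<nu> f - m) - c * psi t"
      unfolding G_def using iF by (simp add: Bochner_Integration.integral_diff)
    also have "measure_pmf.expectation \<nu> f - m = W" unfolding f_def m_def W_def by (rule diff_fN)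
    also have "t * W - c * psi t = h_c c W" unfolding t_def by (rule h_c_formula[OF c W])
    finally show ?thesis .
  qed
  ultimately show ?thesis by (simp add: c_def W_def)
qed


lemma h_fun_mono:
  assumes "0 \<le> x" "x \<le> y" shows "h_fun x \<le> h_fun y"
proof -
  have "(\<lambda>r. (1 + r) * ln (1 + r) - r) x \<le> (\<lambda>r. (1 + r) * ln (1 + r) - r) y"
  proof (rule DERIV_nonneg_imp_nondecreasing[OF assms(2)])
    fix r assume r: "x \<le> r" "r \<le> y"
    then have r0: "0 < 1 + r" using assms by simp
    have "((\<lambda>r. (1 + r) * ln (1 + r) - r) has_real_derivative (ln (1 + r))) (at r)"
      by (rule derivative_eq_intros refl | use r0 in simp)+
    moreover have "0 \<le> ln (1 + r)" using r assms by simp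
    ultimately show "\<exists>d. ((\<lambda>r. (1 + r) * ln (1 + r) - r) has_real_derivative d) (at r) \<and> 0 \<le> d" by blast
  qed
  then show ?thesis by (simp add: h_fun_def)
qed

lemma h_c_mono: "0 < c \<Longrightarrow> 0 \<le> x \<Longrightarrow> x \<le> y \<Longrightarrow> h_c c x \<le> h_c c y"
  unfolding h_c_def by (intro mult_left_mono h_fun_mono divide_right_mono) auto

lemma h_c_cont: assumes "0 < c" "0 \<le> s" shows "isCont (h_c c) s"
proof -
  have "0 < 1 + s / c" using assms by (simp add: add_pos_nonneg)
  then show ?thesis unfolding h_c_def[abs_def] h_fun_def
    using assms by (auto intro!: continuous_intros)
qed

lemma h_c_big:
  assumes c: "0 < c" and x: "c * (exp 2 - 1) \<le> x"
  shows "x \<le> h_c c x"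
proof -
  have "exp 2 \<le> 1 + x / c" using x c by (simp add: field_simps)
  moreover have "0 < exp (2::real)" by simp
  ultimately have L: "2 \<le> ln (1 + x / c)" by (metis ln_exp ln_le_cancel_iff order_less_le_trans)
  have x0: "0 \<le> x" using x c by (smt (verit) exp_ge_add_one_self mult_nonneg_nonneg)
  have "h_c c x = (c + x) * ln (1 + x / c) - x"
    unfolding h_c_def h_fun_def using c by (simp add: field_simps)
  also have "\<dots> \<ge> (c + x) * 2 - x" using L c x0 by (intro diff_right_mono mult_left_mono) auto
  finally have "(c + x) * 2 - x \<le> h_c c x" .
  moreover have "(c + x) * 2 - x = 2 * c + x" by (simp add: algebra_simps)
  ultimately show ?thesis using c by linarith
qed

theorem mainTheorem9:
  fixes a :: real and \<sigma> :: "real measure" and \<mu> :: "nat pmf"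
  assumes "a > 0"
    and "prob_space \<sigma>"
    and "sets \<sigma> = sets borel"
    and "emeasure \<sigma> {0..a} = 1"
    and "\<And>k. pmf \<mu> k = (\<integral>l. poisson_weight l k \<partial>\<sigma>)"
  shows "\<forall>\<nu> :: nat pmf. h_c_ext (a + a\<^sup>2 / 4) (W1 \<nu> \<mu>) \<le> rel_entropy \<nu> \<mu>"
proof
  fix \<nu> :: "nat pmf"
  define c where "c = a + a\<^sup>2 / 4"
  have c: "0 < c" using assms(1) by (simp add: c_def add_pos_nonneg)
  define d where "d k = \<bar>Fc \<nu> k - Fc \<mu> k\<bar>" for k
  define H where "H = rel_entropy \<nu> \<mu>"
  have d0: "0 \<le> d k" for k by (simp add: d_def)
  have WNd: "WN \<nu> \<mu> N = (\<Sum>k<N. d k)" for N by (simp add: WN_def d_def)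
  have hN: "ereal (h_c c (WN \<nu> \<mu> N)) \<le> H" for N
    unfolding c_def H_def by (rule h_bound_N[OF assms])
  have Hn: "H \<noteq> -\<infinity>" using hN[of 0] by auto
  have W1S: "W1 \<nu> \<mu> \<le> (\<Sum>k. ennreal (d k))" unfolding d_def by (rule W1_le)
  show "h_c_ext (a + a\<^sup>2 / 4) (W1 \<nu> \<mu>) \<le> rel_entropy \<nu> \<mu>"
  proof (cases "(\<Sum>k. ennreal (d k)) = \<top>")
    case True
    have ns: "\<not> summable d"
    proof
      assume "summable d"
      then have "(\<Sum>k. ennreal (d k)) = ennreal (suminf d)" by (rule suminf_ennreal2[OF d0])
      with True show False by simp
    qed
    have unb: "\<exists>N. M < WN \<nu> \<mu> N" for M
    proof (rule ccontr)
      assume "\<not> (\<exists>N. M < WN \<nu> \<mu> N)"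
      then have "\<And>N. (\<Sum>k<N. d k) \<le> M" by (simp add: WNd not_less)
      then have "summable d" by (rule summableI_nonneg_bounded[OF d0])
      with ns show False by simp
    qed
    have "H = \<infinity>"
    proof (cases H)
      case (real r)
      obtain N where N: "max (r + 1) (c * (exp 2 - 1)) < WN \<nu> \<mu> N" using unb by blast
      have "WN \<nu> \<mu> N \<le> h_c c (WN \<nu> \<mu> N)" by (rule h_c_big[OF c]) (use N in linarith)
      then have "r + 1 < h_c c (WN \<nu> \<mu> N)" using N by linarith
      with hN[of N] real show ?thesis by simp
    qed (use Hn in auto)
    then show ?thesis by (simp add: H_def)
  next
    case False
    have sd: "summable d" by (rule summable_suminf_not_top[OF d0 False])
    define s where "s = suminf d"
    have s0: "0 \<le> s" unfolding s_def using sd d0 by (simp add: suminf_nonneg)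
    have Se: "(\<Sum>k. ennreal (d k)) = ennreal s" unfolding s_def by (rule suminf_ennreal2[OF d0 sd])
    have lim: "(\<lambda>N. WN \<nu> \<mu> N) \<longlonglongrightarrow> s" unfolding WNd s_def by (rule summable_LIMSEQ[OF sd])
    have hlim: "(\<lambda>N. h_c c (WN \<nu> \<mu> N)) \<longlonglongrightarrow> h_c c s" by (rule isCont_tendsto_compose[OF h_c_cont[OF c s0] lim])
    have hs: "ereal (h_c c s) \<le> H"
    proof (cases H)
      case (real r)
      have "h_c c s \<le> r" by (rule LIMSEQ_le_const2[OF hlim]) (use hN real in auto)
      then show ?thesis using real by simp
    qed (use Hn in auto)
    have Wle: "W1 \<nu> \<mu> \<le> ennreal s" using W1S Se by simp
    then have Wfin: "W1 \<nu> \<mu> \<noteq> \<infinity>" by (metis ennreal_neq_top infinity_ennreal_def top.extremum_uniqueI)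
    have "enn2real (W1 \<nu> \<mu>) \<le> s" using Wle s0 by (metis enn2real_ennreal enn2real_mono ennreal_neq_top less_top)
    then have "h_c c (enn2real (W1 \<nu> \<mu>)) \<le> h_c c s" by (intro h_c_mono[OF c]) simp
    then have "h_c_ext c (W1 \<nu> \<mu>) \<le> ereal (h_c c s)" using Wfin by (simp add: h_c_ext_def)
    also have "\<dots> \<le> H" by (rule hs)
    finally show ?thesis by (simp add: c_def H_def)
  qed
qed


end
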